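(* Let $X=\prod_{p=1}^{n_0}X_p$ where each $X_p$ is a compact metric space of finite topological dimension $d_p$, and set $M=\sum_{p=1}^{n_0}d_p$. Let $\psi_{pq}:X_p\to[0,1]$ ($p=1,\dots,n_0$, $q=1,\dots,2M+1$) be continuous functions such that every $f\in C(X)$ can be written as $f(x_1,\dots,x_{n_0})=\sum_{q=1}^{2M+1}h_q\big(\sum_{p=1}^{n_0}\psi_{pq}(x_p)\big)$ with $h_q\in C(\mathbb{R})$, and set $s_q(x_1,\dots,x_{n_0})=\sum_{p=1}^{n_0}\psi_{pq}(x_p)$ and $F=(s_1,\dots,s_{2M+1}):X\to\mathbb{R}^{2M+1}$. Let $\mathcal{A}(X)\subset C(X)$ be a feature family containing $s_1,\dots,s_{2M+1}$. Assume $\sigma:\mathbb{R}\to\mathbb{R}$ is continuous and nonaffine, and that there exist $t_0\in\mathbb{R}$ and an open neighborhood $U$ of $t_0$ such that $\sigma$ is differentiable on $U$ and $\sigma'$ is continuous at $t_0$ with $\sigma'(t_0)\neq0$. Then for every $m\ge1$, every compact $K\subset X$, every $g\in C(K;\mathbb{R}^m)$ and every $\varepsilon>0$ there is $H\in\mathcal{N}^{(2M+m+3,m)}(X,\sigma;F)$ with $\sup_{x\in K}\|g(x)-H(x)\|_{\mathbb{R}^m}<\varepsilon$.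
   Context: Ostrand's extension of the Kolmogorov superposition theorem guarantees that functions $\psi_{pq}$ as in the claim exist. A classical deep feedforward network $\Phi:\mathbb{R}^n\to\mathbb{R}^m$ with activation $\sigma$ is a map $\Phi=T_{l+1}\circ\sigma\circ T_l\circ\cdots\circ\sigma\circ T_0$ with affine maps $T_0:\mathbb{R}^n\to\mathbb{R}^{k_0}$, $T_j:\mathbb{R}^{k_{j-1}}\to\mathbb{R}^{k_j}$, $T_{l+1}:\mathbb{R}^{k_l}\to\mathbb{R}^m$, $\sigma$ acting componentwise; its width is $\max_j k_j$, with arbitrary depth $l$. For $F=(f_1,\dots,f_n)$ with $f_i\in\mathcal{A}(X)$, $k\in\mathbb{N}$ and $m\ge1$, $\mathcal{N}^{(k,m)}(X,\sigma;F)$ denotes the set of all $H:X\to\mathbb{R}^m$ of the form $H=\Phi\circ F$ where $\Phi:\mathbb{R}^n\to\mathbb{R}^m$ is a classical deep feedforward network with activation $\sigma$ and width at most $k$. *)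

theory Defs
  imports "HOL-Analysis.Analysis"
begin

definition covering_dim_le :: "'a::topological_space set \<Rightarrow> nat \<Rightarrow> bool" where
  "covering_dim_le S d \<longleftrightarrow>
     (\<forall>\<U>. finite \<U> \<and> (\<forall>U\<in>\<U>. openin (top_of_set S) U) \<and> S \<subseteq> \<Union>\<U> \<longrightarrow>
        (\<exists>\<V>. finite \<V> \<and> (\<forall>V\<in>\<V>. openin (top_of_set S) V) \<and> S \<subseteq> \<Union>\<V> \<and>
             (\<forall>V\<in>\<V>. \<exists>U\<in>\<U>. V \<subseteq> U) \<and>
             (\<forall>x\<in>S. card {V\<in>\<V>. x \<in> V} \<le> d + 1)))"

definition has_top_dim :: "'a::topological_space set \<Rightarrow> nat \<Rightarrow> bool" where
  "has_top_dim S d \<longleftrightarrow> covering_dim_le S d \<and> (\<forall>d'<d. \<not> covering_dim_le S d')"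

text \<open>Vectors in R^k are represented as functions nat => real, with
components outside {..<k} equal to 0.\<close>

definition affine_map ::
  "(nat \<Rightarrow> nat \<Rightarrow> real) \<Rightarrow> (nat \<Rightarrow> real) \<Rightarrow> nat \<Rightarrow> nat \<Rightarrow> (nat \<Rightarrow> real) \<Rightarrow> (nat \<Rightarrow> real)" where
  "affine_map W b n k x = (\<lambda>i. if i < k then (\<Sum>j<n. W i j * x j) + b i else 0)"

text \<open>Hidden part sigma o T_l o ... o sigma o T_0; each layer is (W, b, output dimension).\<close>
fun hidden_eval ::
  "(real \<Rightarrow> real) \<Rightarrow> nat \<Rightarrow> ((nat \<Rightarrow> nat \<Rightarrow> real) \<times> (nat \<Rightarrow> real) \<times> nat) list
     \<Rightarrow> (nat \<Rightarrow> real) \<Rightarrow> (nat \<Rightarrow> real)" where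
  "hidden_eval \<sigma> n [] x = x"
| "hidden_eval \<sigma> n ((W, b, k) # Ls) x =
     hidden_eval \<sigma> k Ls (\<lambda>i. if i < k then \<sigma> (affine_map W b n k x i) else 0)"

definition is_network ::
  "(real \<Rightarrow> real) \<Rightarrow> nat \<Rightarrow> nat \<Rightarrow> nat \<Rightarrow> ((nat \<Rightarrow> real) \<Rightarrow> (nat \<Rightarrow> real)) \<Rightarrow> bool" where
  "is_network \<sigma> n m k \<Phi> \<longleftrightarrow>
     (\<exists>Ls Wo bo. Ls \<noteq> [] \<and> (\<forall>(W, b, kj)\<in>set Ls. kj \<le> k) \<and>
        \<Phi> = (\<lambda>x. affine_map Wo bo (snd (snd (last Ls))) m (hidden_eval \<sigma> n Ls x)))"

definition NN ::
  "nat \<Rightarrow> nat \<Rightarrow> 'x set \<Rightarrow> (real \<Rightarrow> real) \<Rightarrow> nat \<Rightarrow> ('x \<Rightarrow> (nat \<Rightarrow> real)) \<Rightarrow> ('x \<Rightarrow> (nat \<Rightarrow> real)) set" where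
  "NN k m X \<sigma> n F = {H. \<exists>\<Phi>. is_network \<sigma> n m k \<Phi> \<and> (\<forall>x\<in>X. H x = \<Phi> (F x))}"

definition euclid_norm :: "nat \<Rightarrow> (nat \<Rightarrow> real) \<Rightarrow> real" where
  "euclid_norm m v = sqrt (\<Sum>i<m. (v i)\<^sup>2)"

end

theory Submission
  imports Defs
begin

definition od :: "nat \<Rightarrow> ((nat \<Rightarrow> nat \<Rightarrow> real) \<times> (nat \<Rightarrow> real) \<times> nat) list \<Rightarrow> nat" where
  "od n Ls = (if Ls = [] then n else snd (snd (last Ls)))"

lemma hidden_append:
  "hidden_eval \<sigma> n (Ls1 @ Ls2) x = hidden_eval \<sigma> (od n Ls1) Ls2 (hidden_eval \<sigma> n Ls1 x)"
proof (induction Ls1 arbitrary: n x)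
  case Nil
  then show ?case by (simp add: od_def)
next
  case (Cons L Ls1)
  obtain W b k where L: "L = (W, b, k)" by (cases L) auto
  show ?case using Cons by (cases Ls1) (auto simp: L od_def)
qed

lemma affine_comp:
  "affine_map W b k k1 (affine_map Wo bo kl k z) =
   affine_map (\<lambda>i j. \<Sum>l<k. W i l * Wo l j) (\<lambda>i. (\<Sum>l<k. W i l * bo l) + b i) kl k1 z"
proof (rule ext)
  fix i
  have "(\<Sum>j<k. W i j * affine_map Wo bo kl k z j)
      = (\<Sum>j<k. W i j * ((\<Sum>l<kl. Wo j l * z l) + bo j))"
    by (rule sum.cong) (auto simp: affine_map_def)
  also have "\<dots> = (\<Sum>j<k. \<Sum>l<kl. W i j * Wo j l * z l) + (\<Sum>j<k. W i j * bo j)"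
    by (simp add: distrib_left sum.distrib sum_distrib_left mult.assoc)
  also have "\<dots> = (\<Sum>l<kl. (\<Sum>j<k. W i j * Wo j l) * z l) + (\<Sum>j<k. W i j * bo j)"
    by (subst sum.swap) (simp add: sum_distrib_right)
  finally show "affine_map W b k k1 (affine_map Wo bo kl k z) i =
   affine_map (\<lambda>i j. \<Sum>l<k. W i l * Wo l j) (\<lambda>i. (\<Sum>l<k. W i l * bo l) + b i) kl k1 z i"
    by (simp add: affine_map_def)
qed

lemma is_network_comp:
  assumes "is_network \<sigma> n k w \<Phi>1" "is_network \<sigma> k m w \<Phi>2"
  shows "is_network \<sigma> n m w (\<lambda>x. \<Phi>2 (\<Phi>1 x))"
proof -
  obtain Ls1 Wo1 bo1 where 1: "Ls1 \<noteq> []" "\<forall>(W, b, kj)\<in>set Ls1. kj \<le> w"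
    "\<Phi>1 = (\<lambda>x. affine_map Wo1 bo1 (snd (snd (last Ls1))) k (hidden_eval \<sigma> n Ls1 x))"
    using assms(1) unfolding is_network_def by blast
  obtain Ls2 Wo2 bo2 where 2: "Ls2 \<noteq> []" "\<forall>(W, b, kj)\<in>set Ls2. kj \<le> w"
    "\<Phi>2 = (\<lambda>x. affine_map Wo2 bo2 (snd (snd (last Ls2))) m (hidden_eval \<sigma> k Ls2 x))"
    using assms(2) unfolding is_network_def by blast
  obtain W b k1 Ls2' where L2: "Ls2 = (W, b, k1) # Ls2'"
    using 2(1) by (metis list.exhaust prod_cases3)
  define W' where "W' = (\<lambda>i j. \<Sum>l<k. W i l * Wo1 l j)"
  define b' where "b' = (\<lambda>i. (\<Sum>l<k. W i l * bo1 l) + b i)"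
  define Ls where "Ls = Ls1 @ (W', b', k1) # Ls2'"
  have lastL: "snd (snd (last Ls)) = snd (snd (last Ls2))"
    by (cases Ls2') (auto simp: Ls_def L2)
  have "\<Phi>2 (\<Phi>1 x) = affine_map Wo2 bo2 (snd (snd (last Ls))) m (hidden_eval \<sigma> n Ls x)" for x
  proof -
    have eq: "affine_map W b k k1 (\<Phi>1 x) = affine_map W' b' (snd (snd (last Ls1))) k1 (hidden_eval \<sigma> n Ls1 x)"
      unfolding 1(3) W'_def b'_def by (rule affine_comp)
    have "hidden_eval \<sigma> n Ls x = hidden_eval \<sigma> k Ls2 (\<Phi>1 x)"
      using 1(1) apply (simp add: Ls_def hidden_append L2 od_def) by (subst eq) (rule refl)
    then show ?thesis by (simp add: 2(3) lastL)
  qed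
  moreover have "Ls \<noteq> []" "\<forall>(W, b, kj)\<in>set Ls. kj \<le> w"
    using 1(2) 2(2) by (auto simp: Ls_def L2)
  ultimately show ?thesis unfolding is_network_def by blast
qed

locale act =
  fixes \<sigma> :: "real \<Rightarrow> real" and t0 :: real and U :: "real set"
  assumes cont: "continuous_on UNIV \<sigma>"
    and nonaff: "\<not> (\<exists>a b. \<forall>t. \<sigma> t = a * t + b)"
    and Uopen: "open U" and t0U: "t0 \<in> U"
    and diffU: "\<And>t. t \<in> U \<Longrightarrow> \<sigma> differentiable (at t)"
    and dcont: "isCont (deriv \<sigma>) t0"
    and dnz: "deriv \<sigma> t0 \<noteq> 0"
begin

lemma isCont_\<sigma>: "isCont \<sigma> x"
  using cont continuous_on_eq_continuous_at by blast

lemma mvt_t0: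
  assumes rho: "\<And>z. \<bar>z - t0\<bar> < \<rho> \<Longrightarrow> z \<in> U" and u: "\<bar>u\<bar> < \<rho>"
  shows "\<exists>\<xi>. \<bar>\<xi> - t0\<bar> \<le> \<bar>u\<bar> \<and> \<sigma> (t0 + u) - \<sigma> t0 = u * deriv \<sigma> \<xi>"
proof (cases "u = 0")
  case True then show ?thesis by (intro exI[of _ t0]) simp
next
  case False
  have der: "DERIV \<sigma> z :> deriv \<sigma> z" if "\<bar>z - t0\<bar> \<le> \<bar>u\<bar>" for z
    using DERIV_deriv_iff_real_differentiable diffU rho that u by fastforce
  show ?thesis
  proof (cases "u > 0")
    case True
    from MVT2[of t0 "t0 + u" \<sigma> "deriv \<sigma>"] True der
    obtain z where "t0 < z" "z < t0 + u" "\<sigma> (t0 + u) - \<sigma> t0 = (t0 + u - t0) * deriv \<sigma> z"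
      by auto
    then show ?thesis by (intro exI[of _ z]) auto
  next
    case False
    with \<open>u \<noteq> 0\<close> have "u < 0" by simp
    from MVT2[of "t0 + u" t0 \<sigma> "deriv \<sigma>"] \<open>u < 0\<close> der
    obtain z where "t0 + u < z" "z < t0" "\<sigma> t0 - \<sigma> (t0 + u) = (t0 - (t0 + u)) * deriv \<sigma> z"
      by auto
    then show ?thesis by (intro exI[of _ z]) (auto simp: algebra_simps)
  qed
qed

lemma near_id:
  assumes "R > 0" "\<eta> > 0"
  shows "\<exists>\<delta>>0. \<forall>x. \<bar>x\<bar> \<le> R \<longrightarrow> \<bar>(\<sigma> (t0 + \<delta> * x) - \<sigma> t0) / (\<delta> * deriv \<sigma> t0) - x\<bar> \<le> \<eta>"
proof -
  define d0 where "d0 = deriv \<sigma> t0"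
  have d0: "d0 \<noteq> 0" using dnz d0_def by simp
  obtain \<rho> where \<rho>: "\<rho> > 0" "ball t0 \<rho> \<subseteq> U" using Uopen t0U openE by blast
  have rho: "\<And>z. \<bar>z - t0\<bar> < \<rho> \<Longrightarrow> z \<in> U" using \<rho>(2) by (auto simp: dist_real_def)
  have "\<eta> * \<bar>d0\<bar> / R > 0" using assms d0 by simp
  then obtain \<rho>' where \<rho>': "\<rho>' > 0" "\<And>z. \<bar>z - t0\<bar> < \<rho>' \<Longrightarrow> \<bar>deriv \<sigma> z - d0\<bar> < \<eta> * \<bar>d0\<bar> / R"
    using dcont unfolding continuous_at_eps_delta d0_def dist_real_def by blast
  define \<delta> where "\<delta> = min \<rho> \<rho>' / (2 * R)"
  have \<delta>: "\<delta> > 0" using \<rho> \<rho>' assms by (simp add: \<delta>_def)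
  have "\<bar>(\<sigma> (t0 + \<delta> * x) - \<sigma> t0) / (\<delta> * d0) - x\<bar> \<le> \<eta>" if x: "\<bar>x\<bar> \<le> R" for x
  proof -
    have "\<bar>\<delta> * x\<bar> \<le> \<delta> * R" using x \<delta> by (simp add: abs_mult)
    also have "\<delta> * R = min \<rho> \<rho>' / 2" using assms by (simp add: \<delta>_def)
    finally have dx: "\<bar>\<delta> * x\<bar> < \<rho>" "\<bar>\<delta> * x\<bar> < \<rho>'" using \<rho> \<rho>' by auto
    obtain \<xi> where \<xi>: "\<bar>\<xi> - t0\<bar> \<le> \<bar>\<delta> * x\<bar>" "\<sigma> (t0 + \<delta> * x) - \<sigma> t0 = \<delta> * x * deriv \<sigma> \<xi>"
      using mvt_t0[OF rho dx(1)] by blast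
    have "\<bar>deriv \<sigma> \<xi> - d0\<bar> < \<eta> * \<bar>d0\<bar> / R" using \<rho>'(2) \<xi>(1) dx(2) by simp
    have "(\<sigma> (t0 + \<delta> * x) - \<sigma> t0) / (\<delta> * d0) - x = x * (deriv \<sigma> \<xi> - d0) / d0"
      using \<xi>(2) \<delta> d0 by (simp add: field_simps)
    also have "\<bar>\<dots>\<bar> = \<bar>x\<bar> * \<bar>deriv \<sigma> \<xi> - d0\<bar> / \<bar>d0\<bar>" by (simp add: abs_mult)
    also have "\<dots> \<le> R * (\<eta> * \<bar>d0\<bar> / R) / \<bar>d0\<bar>"
      using \<open>\<bar>deriv \<sigma> \<xi> - d0\<bar> < _\<close> x d0
      by (intro divide_right_mono mult_mono) auto
    also have "\<dots> = \<eta>" using assms d0 by simp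
    finally show ?thesis .
  qed
  then show ?thesis using \<delta> by (auto simp: d0_def)
qed

lemma second_diff: "\<exists>x h. \<sigma> (x + 2 * h) - 2 * \<sigma> (x + h) + \<sigma> x \<noteq> 0"
proof (rule ccontr)
  assume "\<not> ?thesis"
  then have H: "\<And>x h. \<sigma> (x + 2 * h) - 2 * \<sigma> (x + h) + \<sigma> x = 0" by blast
  define g where "g t = \<sigma> t - \<sigma> 0 - (\<sigma> 1 - \<sigma> 0) * t" for t
  have Hg: "g (x + 2 * h) - 2 * g (x + h) + g x = 0" for x h
    using H[of x h] by (simp add: g_def algebra_simps)
  have g0: "g 0 = 0" and g1: "g 1 = 0" by (simp_all add: g_def)
  have gk: "g (real k * h) = real k * g h \<and> g (real (Suc k) * h) = real (Suc k) * g h" for k h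
  proof (induction k)
    case 0 then show ?case by (simp add: g0)
  next
    case (Suc k)
    have "g (real k * h + 2 * h) = 2 * g (real k * h + h) - g (real k * h)"
      using Hg[of "real k * h" h] by simp
    then have "g (real (Suc (Suc k)) * h) = 2 * g (real (Suc k) * h) - g (real k * h)"
      by (simp add: algebra_simps)
    with Suc show ?case by (simp add: algebra_simps)
  qed
  have gneg: "g (- h) = - g h" for h
    using Hg[of "-h" h] g0 by simp
  have ginv: "g (1 / real N) = 0" if "N > 0" for N
  proof -
    have "g (real N * (1 / real N)) = real N * g (1 / real N)" using gk by blast
    then show ?thesis using that g1 by simp
  qed
  have grat: "g (real_of_int j / real N) = 0" if "N > 0" for j N
  proof (cases "j \<ge> 0")
    case True
    then have e: "real_of_int j / real N = real (nat j) * (1 / real N)" by simp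
    show ?thesis unfolding e by (simp only: conjunct1[OF gk] ginv[OF that] mult_zero_right)
  next
    case False
    then have e: "real_of_int j / real N = - (real (nat (- j)) * (1 / real N))" by simp
    have "g (real (nat (-j)) * (1 / real N)) = 0" by (simp only: conjunct1[OF gk] ginv[OF that] mult_zero_right)
    then show ?thesis unfolding e gneg by simp
  qed
  have gcont: "isCont g t" for t
    unfolding g_def by (intro continuous_intros isCont_\<sigma>)
  have "g t = 0" for t
  proof (rule ccontr)
    assume "g t \<noteq> 0"
    then have "\<bar>g t\<bar> > 0" by simp
    with gcont[of t, unfolded continuous_at_eps_delta] obtain d where
      d0: "d > 0" "\<forall>t'. dist t' t < d \<longrightarrow> dist (g t') (g t) < \<bar>g t\<bar>" by blast
    then have d: "d > 0" "\<And>t'. \<bar>t' - t\<bar> < d \<Longrightarrow> \<bar>g t' - g t\<bar> < \<bar>g t\<bar>"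
      by (auto simp: dist_real_def)
    obtain N :: nat where N: "1 / d < real N" using reals_Archimedean2 by blast
    then have Npos: "N > 0" using d by (auto intro: ccontr)
    define j where "j = \<lfloor>t * real N\<rfloor>"
    have "real_of_int j \<le> t * real N" "t * real N < real_of_int j + 1"
      unfolding j_def by linarith+
    then have "real_of_int j / real N \<le> t" "t < real_of_int j / real N + 1 / real N" using Npos
      by (simp_all add: divide_le_eq less_divide_eq add_divide_distrib[symmetric])
    then have "\<bar>real_of_int j / real N - t\<bar> < 1 / real N" by linarith
    also have "1 / real N < d" using N d Npos by (simp add: field_simps)
    finally have "\<bar>g (real_of_int j / real N) - g t\<bar> < \<bar>g t\<bar>" using d(2) by blast
    then show False using grat[OF Npos] by simp
  qed
  then have "\<forall>t. \<sigma> t = (\<sigma> 1 - \<sigma> 0) * t + \<sigma> 0" by (simp add: g_def algebra_simps)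
  then show False using nonaff by blast
qed

end

lemma tele: fixes G :: "real \<Rightarrow> real" shows "G (w + real p * c) - G w = (\<Sum>i<p. G (w + real i * c + c) - G (w + real i * c))"
proof -
  have "(\<Sum>i<p. G (w + real (Suc i) * c) - G (w + real i * c)) = G (w + real p * c) - G (w + real 0 * c)"
    by (rule sum_lessThan_telescope[of "\<lambda>i. G (w + real i * c)"])
  moreover have "(\<Sum>i<p. G (w + real (Suc i) * c) - G (w + real i * c)) =
      (\<Sum>i<p. G (w + real i * c + c) - G (w + real i * c))"
    by (simp add: algebra_simps)
  ultimately show ?thesis by simp
qed

definition dsA :: "(real \<Rightarrow> real) \<Rightarrow> nat \<Rightarrow> real \<Rightarrow> real \<Rightarrow> real" where
  "dsA f N c z = (\<Sum>j<N. \<Sum>k<N. f (z + real (j + k) * c))"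

definition dsB :: "(real \<Rightarrow> real) \<Rightarrow> nat \<Rightarrow> real \<Rightarrow> real \<Rightarrow> real" where
  "dsB f N c z = (\<Sum>j<N. f (z + real j * c + 1) - f (z + real j * c))"

lemma dsA1:
  assumes "real N * c = 1"
  shows "dsA f N c (z + c) - dsA f N c z = dsB f N c z"
proof -
  have "dsA f N c (z + c) - dsA f N c z =
        (\<Sum>j<N. \<Sum>k<N. f (z + real j * c + real k * c + c) - f (z + real j * c + real k * c))"
    unfolding dsA_def by (simp add: sum_subtractf algebra_simps)
  also have "\<dots> = (\<Sum>j<N. f (z + real j * c + real N * c) - f (z + real j * c))"
    by (rule sum.cong[OF refl]) (rule tele[symmetric])
  also have "\<dots> = dsB f N c z" using assms by (simp add: dsB_def)
  finally show ?thesis .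
qed

lemma dsB1:
  assumes "real N * c = 1"
  shows "dsB f N c (z + c) - dsB f N c z = f (z + 2) - 2 * f (z + 1) + f z"
proof -
  have "dsB f N c (z + c) - dsB f N c z =
     (\<Sum>j<N. f ((z + 1) + real j * c + c) - f ((z + 1) + real j * c)) -
     (\<Sum>j<N. f (z + real j * c + c) - f (z + real j * c))"
    unfolding dsB_def by (simp add: sum_subtractf algebra_simps)
  also have "\<dots> = (f ((z + 1) + real N * c) - f (z + 1)) - (f (z + real N * c) - f z)"
    by (simp only: tele[symmetric])
  also have "\<dots> = f (z + 2) - 2 * f (z + 1) + f z" using assms by (simp add: algebra_simps)
  finally show ?thesis .
qed

lemma dsA3:
  assumes "real N * c = 1"
  shows "dsA f N c (z + real p * c) + dsA f N c (z - real p * c) - 2 * dsA f N c z =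
    (\<Sum>i<p. \<Sum>l<p. f (z - real p * c + real i * c + real l * c + 2)
        - 2 * f (z - real p * c + real i * c + real l * c + 1) + f (z - real p * c + real i * c + real l * c))" (is "_ = ?rhs")
proof -
  have e1: "dsA f N c (z + real p * c) - dsA f N c z = (\<Sum>i<p. dsB f N c (z + real i * c))"
    by (subst tele) (simp add: dsA1[OF assms])
  have e2: "dsA f N c z - dsA f N c (z - real p * c) = (\<Sum>i<p. dsB f N c (z - real p * c + real i * c))"
    using tele[of "dsA f N c" "z - real p * c" p c] by (simp add: dsA1[OF assms])
  have e3: "dsB f N c (z + real i * c) - dsB f N c (z - real p * c + real i * c) =
     (\<Sum>l<p. f (z - real p * c + real i * c + real l * c + 2)
        - 2 * f (z - real p * c + real i * c + real l * c + 1) + f (z - real p * c + real i * c + real l * c))" for i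
    using tele[of "dsB f N c" "z - real p * c + real i * c" p c] by (simp add: dsB1[OF assms])
  have "dsA f N c (z + real p * c) + dsA f N c (z - real p * c) - 2 * dsA f N c z =
     (\<Sum>i<p. dsB f N c (z + real i * c) - dsB f N c (z - real p * c + real i * c))"
    using e1 e2 by (simp add: sum_subtractf)

  also have "\<dots> = ?rhs" using e3 by simp
  finally show ?thesis .
qed

lemma dsA_close:
  assumes Nc: "real N * c = 1" and c: "c > 0"
    and om: "\<And>z z'. z \<in> {-2..4} \<Longrightarrow> z' \<in> {-2..4} \<Longrightarrow> \<bar>z - z'\<bar> \<le> c \<Longrightarrow> \<bar>f z - f z'\<bar> \<le> \<omega>"
    and y: "\<bar>y\<bar> \<le> 1" "\<bar>y'\<bar> \<le> 1" "\<bar>y - y'\<bar> \<le> c"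
  shows "\<bar>dsA f N c y - dsA f N c y'\<bar> \<le> real N * real N * \<omega>"
proof -
  have s: "0 \<le> real (j + k) * c \<and> real (j + k) * c \<le> 2" if "j < N" "k < N" for j k
  proof -
    have "real (j + k) \<le> 2 * real N" using that by simp
    then have "real (j + k) * c \<le> 2 * real N * c" using c by (intro mult_right_mono) auto
    moreover have "2 * real N * c = 2" using Nc by (simp add: mult.assoc)
    ultimately show ?thesis using c by simp
  qed
  have t: "\<bar>f (y + real (j + k) * c) - f (y' + real (j + k) * c)\<bar> \<le> \<omega>" if "j < N" "k < N" for j k
  proof -
    have s1: "0 \<le> real (j + k) * c" "real (j + k) * c \<le> 2" using s[OF that] by auto
    have y1: "-1 \<le> y" "y \<le> 1" "-1 \<le> y'" "y' \<le> 1" using y by auto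
    show ?thesis
    proof (rule om)
      show "y + real (j + k) * c \<in> {-2..4}" unfolding atLeastAtMost_iff using s1 y1 by (intro conjI; linarith)
      show "y' + real (j + k) * c \<in> {-2..4}" unfolding atLeastAtMost_iff using s1 y1 by (intro conjI; linarith)
      show "\<bar>y + real (j + k) * c - (y' + real (j + k) * c)\<bar> \<le> c" using y by simp
    qed
  qed
  have "\<bar>dsA f N c y - dsA f N c y'\<bar> =
      \<bar>\<Sum>j<N. \<Sum>k<N. f (y + real (j + k) * c) - f (y' + real (j + k) * c)\<bar>"
    unfolding dsA_def by (simp add: sum_subtractf)
  also have "\<dots> \<le> (\<Sum>j<N. \<bar>\<Sum>k<N. f (y + real (j + k) * c) - f (y' + real (j + k) * c)\<bar>)"
    by (rule sum_abs)
  also have "\<dots> \<le> (\<Sum>j<N. \<Sum>k<N. \<bar>f (y + real (j + k) * c) - f (y' + real (j + k) * c)\<bar>)"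
    by (intro sum_mono sum_abs)
  also have "\<dots> \<le> (\<Sum>j<N. \<Sum>k<N. \<omega>)"
    by (intro sum_mono t) auto
  also have "\<dots> = real N * real N * \<omega>" by simp
  finally show ?thesis .
qed

lemma grid_sum:
  assumes Nc: "real N * c = 1" and c: "c > 0" and pr: "real p * c \<le> r"
    and ka: "\<And>w. \<bar>w\<bar> \<le> r \<Longrightarrow> \<bar>f (w + 2) - 2 * f (w + 1) + f w - D\<bar> \<le> \<kappa>"
  shows "\<bar>dsA f N c (real p * c) + dsA f N c (- (real p * c)) - 2 * dsA f N c 0 - real p * real p * D\<bar>
          \<le> real p * real p * \<kappa>"
proof -
  define \<Delta> where "\<Delta> w = f (w + 2) - 2 * f (w + 1) + f w" for w
  have e: "dsA f N c (real p * c) + dsA f N c (- (real p * c)) - 2 * dsA f N c 0 =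
     (\<Sum>i<p. \<Sum>l<p. \<Delta> (- (real p * c) + real i * c + real l * c))"
    using dsA3[OF Nc, of f 0 p] by (simp add: \<Delta>_def)
  have b: "\<bar>\<Delta> (- (real p * c) + real i * c + real l * c) - D\<bar> \<le> \<kappa>" if "i < p" "l < p" for i l
  proof -
    have "real i * c \<le> real p * c" "real l * c \<le> real p * c"
      using that c by (auto intro: mult_right_mono)
    moreover have "0 \<le> real i * c" "0 \<le> real l * c" using c by auto
    moreover have "real i * c + real l * c \<le> 2 * (real p * c)" using calculation by linarith
    ultimately have "\<bar>- (real p * c) + real i * c + real l * c\<bar> \<le> r" using pr by (simp add: abs_le_iff)
    then show ?thesis using ka by (simp add: \<Delta>_def)
  qed
  have "\<bar>(\<Sum>i<p. \<Sum>l<p. \<Delta> (- (real p * c) + real i * c + real l * c)) - real p * real p * D\<bar> =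
        \<bar>\<Sum>i<p. \<Sum>l<p. \<Delta> (- (real p * c) + real i * c + real l * c) - D\<bar>"
    by (simp add: sum_subtractf)
  also have "\<dots> \<le> (\<Sum>i<p. \<bar>\<Sum>l<p. \<Delta> (- (real p * c) + real i * c + real l * c) - D\<bar>)"
    by (rule sum_abs)
  also have "\<dots> \<le> (\<Sum>i<p. \<Sum>l<p. \<bar>\<Delta> (- (real p * c) + real i * c + real l * c) - D\<bar>)"
    by (intro sum_mono sum_abs)
  also have "\<dots> \<le> (\<Sum>i<p. \<Sum>l<p. \<kappa>)"
    by (intro sum_mono b) auto
  also have "\<dots> = real p * real p * \<kappa>" by simp
  finally show ?thesis using e by simp
qed

lemma E_bound:
  assumes Nc: "real N * c = 1" and c: "c > 0" and r: "0 < r" "r \<le> 1"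
    and om: "\<And>z z'. z \<in> {-2..4} \<Longrightarrow> z' \<in> {-2..4} \<Longrightarrow> \<bar>z - z'\<bar> \<le> c \<Longrightarrow> \<bar>f z - f z'\<bar> \<le> \<omega>"
    and ka: "\<And>w. \<bar>w\<bar> \<le> r \<Longrightarrow> \<bar>f (w + 2) - 2 * f (w + 1) + f w - D\<bar> \<le> \<kappa>"
    and v: "0 \<le> v" "v \<le> r" and kpos: "\<kappa> \<ge> 0"
  shows "\<bar>c\<^sup>2 * (dsA f N c v + dsA f N c (- v) - 2 * dsA f N c 0) - v\<^sup>2 * D\<bar>
           \<le> 2 * \<omega> + r\<^sup>2 * \<kappa> + 2 * r * c * \<bar>D\<bar>"
proof -
  define p where "p = nat \<lfloor>v / c\<rfloor>"
  have vc: "0 \<le> v / c" using v c by simp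
  have p1: "real p \<le> v / c" "v / c < real p + 1" unfolding p_def using vc by linarith+
  have pc: "real p * c \<le> v" "v < real p * c + c" using p1 c by (simp_all add: field_simps)
  define v' where "v' = real p * c"
  have v': "0 \<le> v'" "v' \<le> v" "v - v' \<le> c" using pc c by (auto simp: v'_def)
  define E where "E y = dsA f N c y + dsA f N c (- y) - 2 * dsA f N c 0" for y
  have c2N: "c\<^sup>2 * (real N * real N) = 1" using Nc by (simp add: power2_eq_square algebra_simps)
  have d1: "\<bar>dsA f N c v - dsA f N c v'\<bar> \<le> real N * real N * \<omega>"
    using v v' r by (intro dsA_close[OF Nc c om]) auto
  have d2: "\<bar>dsA f N c (-v) - dsA f N c (-v')\<bar> \<le> real N * real N * \<omega>"
    using v v' r by (intro dsA_close[OF Nc c om]) auto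
  have g: "\<bar>E v' - real p * real p * D\<bar> \<le> real p * real p * \<kappa>"
    unfolding E_def v'_def using v' v by (intro grid_sum[OF Nc c _ ka]) (auto simp: v'_def)
  have "\<bar>E v - E v'\<bar> \<le> 2 * (real N * real N * \<omega>)"
    using d1 d2 unfolding E_def by linarith
  then have A: "\<bar>c\<^sup>2 * E v - c\<^sup>2 * E v'\<bar> \<le> 2 * \<omega>"
  proof -
    have "\<bar>c\<^sup>2 * E v - c\<^sup>2 * E v'\<bar> = c\<^sup>2 * \<bar>E v - E v'\<bar>" by (simp add: abs_mult right_diff_distrib[symmetric])
    also have "\<dots> \<le> c\<^sup>2 * (2 * (real N * real N * \<omega>))"
      using \<open>\<bar>E v - E v'\<bar> \<le> _\<close> by (intro mult_left_mono) auto
    also have "\<dots> = 2 * \<omega> * (c\<^sup>2 * (real N * real N))" by (simp add: algebra_simps)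
    finally show ?thesis using c2N by simp
  qed
  have Bp: "\<bar>c\<^sup>2 * E v' - v'\<^sup>2 * D\<bar> \<le> v'\<^sup>2 * \<kappa>"
  proof -
    have "c\<^sup>2 * E v' - v'\<^sup>2 * D = c\<^sup>2 * (E v' - real p * real p * D)"
      by (simp add: v'_def power2_eq_square algebra_simps)
    then have "\<bar>c\<^sup>2 * E v' - v'\<^sup>2 * D\<bar> = c\<^sup>2 * \<bar>E v' - real p * real p * D\<bar>" by (simp add: abs_mult)
    also have "\<dots> \<le> c\<^sup>2 * (real p * real p * \<kappa>)" using g by (intro mult_left_mono) auto
    also have "\<dots> = v'\<^sup>2 * \<kappa>" by (simp add: v'_def power2_eq_square algebra_simps)
    finally show ?thesis .
  qed
  have v'k: "v'\<^sup>2 * \<kappa> \<le> r\<^sup>2 * \<kappa>"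
    using v' v kpos by (intro mult_right_mono power_mono) auto
  have C: "\<bar>v'\<^sup>2 * D - v\<^sup>2 * D\<bar> \<le> 2 * r * c * \<bar>D\<bar>"
  proof -
    have e: "v'\<^sup>2 * D - v\<^sup>2 * D = - ((v - v') * (v + v') * D)"
      by (simp add: power2_eq_square algebra_simps)
    have "0 \<le> (v - v') * (v + v')" using v' by simp
    then have "\<bar>v'\<^sup>2 * D - v\<^sup>2 * D\<bar> = (v - v') * (v + v') * \<bar>D\<bar>"
      unfolding e abs_minus_cancel by (simp only: abs_mult[of "(v - v') * (v + v')" D] abs_of_nonneg)
    also have "\<dots> \<le> c * (2 * r) * \<bar>D\<bar>"
      using v' v by (intro mult_right_mono mult_mono) auto
    finally show ?thesis by (simp add: algebra_simps)
  qed
  show ?thesis using A Bp v'k C unfolding E_def[symmetric] by (simp add: abs_le_iff)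
qed

context act
begin

definition cval :: "(real \<times> real \<times> real) list \<Rightarrow> real \<Rightarrow> real" where
  "cval L x = (\<Sum>(l, a, b)\<leftarrow>L. l * \<sigma> (a * x + b))"

lemma cval_append: "cval (L1 @ L2) x = cval L1 x + cval L2 x"
  by (simp add: cval_def)

lemma cval_concat_upt: "cval (concat (map F [0..<N])) x = (\<Sum>j<N. cval (F j) x)"
  by (induction N) (simp_all add: cval_append, simp add: cval_def)

lemma sq_approx:
  assumes B: "B > 0" and eta: "\<eta> > 0"
  shows "\<exists>L. \<forall>x. \<bar>x\<bar> \<le> B \<longrightarrow> \<bar>cval L x - x\<^sup>2\<bar> \<le> \<eta>"
proof -
  obtain u h where D0: "\<sigma> (u + 2 * h) - 2 * \<sigma> (u + h) + \<sigma> u \<noteq> 0" using second_diff by blast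
  define f where "f z = \<sigma> (u + h * z)" for z
  define D where "D = f 2 - 2 * f 1 + f 0"
  have D: "D \<noteq> 0" using D0 by (simp add: D_def f_def mult.commute)
  have fc: "isCont f z" for z unfolding f_def by (rule isCont_o2[OF _ isCont_\<sigma>]) (intro continuous_intros)
  have fc': "isCont g x \<Longrightarrow> isCont (\<lambda>w. f (g w)) x" for g x by (rule isCont_o2[OF _ fc])
  define \<Delta> where "\<Delta> w = f (w + 2) - 2 * f (w + 1) + f w" for w
  have \<Delta>0: "\<Delta> 0 = D" by (simp add: \<Delta>_def D_def)
  have \<Delta>c: "isCont \<Delta> 0" unfolding \<Delta>_def by (intro continuous_intros fc')
  define \<kappa> where "\<kappa> = \<eta> * \<bar>D\<bar> / (3 * B\<^sup>2)"
  have \<kappa>: "\<kappa> > 0" using D B eta by (simp add: \<kappa>_def)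
  obtain r0 where r0: "r0 > 0" "\<forall>w. dist w 0 < r0 \<longrightarrow> dist (\<Delta> w) (\<Delta> 0) < \<kappa>"
    using \<Delta>c \<kappa> unfolding continuous_at_eps_delta by blast
  define r where "r = min (r0 / 2) 1"
  have r: "0 < r" "r \<le> 1" using r0 by (auto simp: r_def)
  have ka: "\<bar>f (w + 2) - 2 * f (w + 1) + f w - D\<bar> \<le> \<kappa>" if "\<bar>w\<bar> \<le> r" for w
  proof -
    have "dist w 0 < r0" using that r0 by (simp add: r_def)
    then show ?thesis using r0(2) \<Delta>0 by (fastforce simp: dist_real_def \<Delta>_def)
  qed
  define \<omega> where "\<omega> = \<eta> * r\<^sup>2 * \<bar>D\<bar> / (6 * B\<^sup>2)"
  have \<omega>: "\<omega> > 0" using D B eta r by (simp add: \<omega>_def)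
  have "continuous_on {-2..4} f" by (intro continuous_at_imp_continuous_on ballI fc)
  then have "uniformly_continuous_on {-2..4} f" by (intro compact_uniformly_continuous) auto
  then obtain du where du: "du > 0" "\<forall>z\<in>{-2..4}. \<forall>z'\<in>{-2..4}. dist z' z < du \<longrightarrow> dist (f z') (f z) < \<omega>"
    using \<omega> unfolding uniformly_continuous_on_def by blast
  obtain N :: nat where N: "max (1 / du) (6 * B\<^sup>2 / (\<eta> * r)) < real N" using reals_Archimedean2 by blast
  have Npos: "real N > 0" using N du by (smt (verit) divide_pos_pos)
  define c where "c = 1 / real N"
  have c: "c > 0" "real N * c = 1" using Npos by (auto simp: c_def)
  have cdu: "c < du" using N du Npos by (simp add: c_def field_simps)
  have cr: "c \<le> \<eta> * r / (6 * B\<^sup>2)" using N Npos B eta r by (simp add: c_def field_simps)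
  have om: "\<bar>f z - f z'\<bar> \<le> \<omega>" if "z \<in> {-2..4}" "z' \<in> {-2..4}" "\<bar>z - z'\<bar> \<le> c" for z z'
    using du(2) that cdu by (fastforce simp: dist_real_def)
  define C where "C = B\<^sup>2 * c\<^sup>2 / (r\<^sup>2 * D)"
  define L where "L = concat (map (\<lambda>j. concat (map (\<lambda>k.
        [(C, h * r / B, u + h * (real (j + k) * c)), (C, - (h * r / B), u + h * (real (j + k) * c)),
         (- 2 * C, 0, u + h * (real (j + k) * c))]) [0..<N])) [0..<N])"
  define E where "E y = dsA f N c y + dsA f N c (- y) - 2 * dsA f N c 0" for y
  have cvalL: "cval L x = C * E (r * x / B)" for x
  proof -
    have t: "cval [(C, h * r / B, u + h * s), (C, - (h * r / B), u + h * s), (- 2 * C, 0, u + h * s)] x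
       = C * (f (r * x / B + s) + f (- (r * x / B) + s) - 2 * f (0 + s))" for s
      by (simp add: cval_def f_def algebra_simps)
    have "cval L x = (\<Sum>j<N. \<Sum>k<N. C * (f (r * x / B + real (j + k) * c) + f (- (r * x / B) + real (j + k) * c)
                  - 2 * f (0 + real (j + k) * c)))"
      unfolding L_def cval_concat_upt t by simp
    also have "\<dots> = C * E (r * x / B)"
      by (simp add: E_def dsA_def sum_distrib_left sum.distrib sum_subtractf algebra_simps)
    finally show ?thesis .
  qed
  have "\<bar>cval L x - x\<^sup>2\<bar> \<le> \<eta>" if x: "\<bar>x\<bar> \<le> B" for x
  proof -
    define v where "v = \<bar>r * x / B\<bar>"
    have v: "0 \<le> v" "v \<le> r"
    proof -
      show "0 \<le> v" by (simp add: v_def)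
      have "\<bar>r * x / B\<bar> = r * (\<bar>x\<bar> / B)" using r B by (simp add: abs_mult)
      also have "\<dots> \<le> r * 1" using x B r by (intro mult_left_mono) auto
      finally show "v \<le> r" by (simp add: v_def)
    qed
    have Eneg: "E (- y) = E y" for y by (simp add: E_def)
    have "v = r * x / B \<or> v = - (r * x / B)" unfolding v_def by linarith
    then have Ev: "E (r * x / B) = E v" using Eneg by auto
    have eb: "\<bar>c\<^sup>2 * E v - v\<^sup>2 * D\<bar> \<le> 2 * \<omega> + r\<^sup>2 * \<kappa> + 2 * r * c * \<bar>D\<bar>"
      unfolding E_def by (rule E_bound[OF c(2) c(1) r om ka v \<kappa>[THEN less_imp_le]])
    define K where "K = B\<^sup>2 / (r\<^sup>2 * \<bar>D\<bar>)"
    have K: "K > 0" using B r D by (simp add: K_def)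
    have vx: "v\<^sup>2 = r\<^sup>2 * x\<^sup>2 / B\<^sup>2" by (simp add: v_def power2_eq_square abs_mult field_simps)
    have "cval L x - x\<^sup>2 = (B\<^sup>2 / (r\<^sup>2 * D)) * (c\<^sup>2 * E v - v\<^sup>2 * D)"
      using B r D unfolding cvalL Ev C_def vx by (simp add: field_simps power2_eq_square)
    then have "\<bar>cval L x - x\<^sup>2\<bar> = K * \<bar>c\<^sup>2 * E v - v\<^sup>2 * D\<bar>"
      by (simp add: K_def abs_mult)
    also have "\<dots> \<le> K * (2 * \<omega> + r\<^sup>2 * \<kappa> + 2 * r * c * \<bar>D\<bar>)"
      using eb K by (intro mult_left_mono) auto
    also have "\<dots> = \<eta> / 3 + \<eta> / 3 + 2 * B\<^sup>2 * c / r"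
      using B r D by (simp add: K_def \<omega>_def \<kappa>_def field_simps power2_eq_square)
    also have "2 * B\<^sup>2 * c / r \<le> \<eta> / 3"
    proof -
      have "2 * B\<^sup>2 * c / r \<le> 2 * B\<^sup>2 * (\<eta> * r / (6 * B\<^sup>2)) / r"
        using cr B r by (intro divide_right_mono mult_left_mono) auto
      also have "\<dots> = \<eta> / 3" using B r by (simp add: field_simps power2_eq_square)
      finally show ?thesis .
    qed
    finally show ?thesis by simp
  qed
  then show ?thesis by blast
qed

end

definition box :: "nat \<Rightarrow> real \<Rightarrow> (nat \<Rightarrow> real) set" where
  "box k R = {v. (\<forall>i<k. \<bar>v i\<bar> \<le> R) \<and> (\<forall>i. k \<le> i \<longrightarrow> v i = 0)}"

definition goodm :: "nat \<Rightarrow> ((nat \<Rightarrow> real) \<Rightarrow> (nat \<Rightarrow> real)) \<Rightarrow> bool" where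
  "goodm k \<Psi> \<longleftrightarrow> (\<forall>R. \<exists>R'. \<forall>v\<in>box k R. \<Psi> v \<in> box k R') \<and>
     (\<forall>R \<epsilon>. \<epsilon> > 0 \<longrightarrow> (\<exists>\<delta>>0. \<forall>v\<in>box k R. \<forall>w\<in>box k R.
        (\<forall>i<k. \<bar>v i - w i\<bar> \<le> \<delta>) \<longrightarrow> (\<forall>i<k. \<bar>\<Psi> v i - \<Psi> w i\<bar> \<le> \<epsilon>)))"

definition goods :: "nat \<Rightarrow> ((nat \<Rightarrow> real) \<Rightarrow> real) \<Rightarrow> bool" where
  "goods k \<phi> \<longleftrightarrow> (\<forall>R. \<exists>C. \<forall>v\<in>box k R. \<bar>\<phi> v\<bar> \<le> C) \<and>
     (\<forall>R \<epsilon>. \<epsilon> > 0 \<longrightarrow> (\<exists>\<delta>>0. \<forall>v\<in>box k R. \<forall>w\<in>box k R.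
        (\<forall>i<k. \<bar>v i - w i\<bar> \<le> \<delta>) \<longrightarrow> \<bar>\<phi> v - \<phi> w\<bar> \<le> \<epsilon>))"

definition lin :: "nat \<Rightarrow> (nat \<Rightarrow> real) \<Rightarrow> real \<Rightarrow> (nat \<Rightarrow> real) \<Rightarrow> real" where
  "lin k a c v = (\<Sum>j<k. a j * v j) + c"

lemma box_mono: "v \<in> box k R \<Longrightarrow> R \<le> R' \<Longrightarrow> v \<in> box k R'"
  by (auto simp: box_def)

lemma goodm_bnd: "goodm k \<Psi> \<Longrightarrow> \<exists>R'. \<forall>v\<in>box k R. \<Psi> v \<in> box k R'"
  unfolding goodm_def by (elim conjE allE)

lemma goodm_uc: "goodm k \<Psi> \<Longrightarrow> \<epsilon> > 0 \<Longrightarrow> \<exists>\<delta>>0. \<forall>v\<in>box k R. \<forall>w\<in>box k R.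
        (\<forall>i<k. \<bar>v i - w i\<bar> \<le> \<delta>) \<longrightarrow> (\<forall>i<k. \<bar>\<Psi> v i - \<Psi> w i\<bar> \<le> \<epsilon>)"
  unfolding goodm_def by (elim conjE allE impE) 

lemma goodmI:
  assumes "\<And>R. \<exists>R'. \<forall>v\<in>box k R. \<Psi> v \<in> box k R'"
    and "\<And>R \<epsilon>. \<epsilon> > 0 \<Longrightarrow> \<exists>\<delta>>0. \<forall>v\<in>box k R. \<forall>w\<in>box k R.
        (\<forall>i<k. \<bar>v i - w i\<bar> \<le> \<delta>) \<longrightarrow> (\<forall>i<k. \<bar>\<Psi> v i - \<Psi> w i\<bar> \<le> \<epsilon>)"
  shows "goodm k \<Psi>"
  unfolding goodm_def using assms by blast

lemma goodm_comp:
  assumes "goodm k \<Psi>1" "goodm k \<Psi>2"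
  shows "goodm k (\<lambda>v. \<Psi>2 (\<Psi>1 v))"
proof (rule goodmI)
  fix R
  obtain R' where R': "\<forall>v\<in>box k R. \<Psi>1 v \<in> box k R'" using goodm_bnd[OF assms(1)] by blast
  obtain R'' where "\<forall>v\<in>box k R'. \<Psi>2 v \<in> box k R''" using goodm_bnd[OF assms(2)] by blast
  then show "\<exists>R''. \<forall>v\<in>box k R. \<Psi>2 (\<Psi>1 v) \<in> box k R''" using R' by blast
next
  fix R \<epsilon> :: real assume e: "\<epsilon> > 0"
  obtain R' where R': "\<forall>v\<in>box k R. \<Psi>1 v \<in> box k R'" using goodm_bnd[OF assms(1)] by blast
  obtain \<delta>2 where d2: "\<delta>2 > 0" "\<forall>v\<in>box k R'. \<forall>w\<in>box k R'. (\<forall>i<k. \<bar>v i - w i\<bar> \<le> \<delta>2) \<longrightarrow> (\<forall>i<k. \<bar>\<Psi>2 v i - \<Psi>2 w i\<bar> \<le> \<epsilon>)"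
    using goodm_uc[OF assms(2) e] by blast
  obtain \<delta>1 where d1: "\<delta>1 > 0" "\<forall>v\<in>box k R. \<forall>w\<in>box k R. (\<forall>i<k. \<bar>v i - w i\<bar> \<le> \<delta>1) \<longrightarrow> (\<forall>i<k. \<bar>\<Psi>1 v i - \<Psi>1 w i\<bar> \<le> \<delta>2)"
    using goodm_uc[OF assms(1) d2(1)] by blast
  show "\<exists>\<delta>>0. \<forall>v\<in>box k R. \<forall>w\<in>box k R. (\<forall>i<k. \<bar>v i - w i\<bar> \<le> \<delta>) \<longrightarrow> (\<forall>i<k. \<bar>\<Psi>2 (\<Psi>1 v) i - \<Psi>2 (\<Psi>1 w) i\<bar> \<le> \<epsilon>)"
  proof (intro exI[of _ \<delta>1] conjI ballI impI d1(1))
    fix v w assume vw: "v \<in> box k R" "w \<in> box k R" "\<forall>i<k. \<bar>v i - w i\<bar> \<le> \<delta>1"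
    then have "\<forall>i<k. \<bar>\<Psi>1 v i - \<Psi>1 w i\<bar> \<le> \<delta>2" using d1(2) by blast
    moreover have "\<Psi>1 v \<in> box k R'" "\<Psi>1 w \<in> box k R'" using R' vw by auto
    ultimately show "\<forall>i<k. \<bar>\<Psi>2 (\<Psi>1 v) i - \<Psi>2 (\<Psi>1 w) i\<bar> \<le> \<epsilon>" using d2(2) by blast
  qed
qed

lemma goods_bnd: "goods k \<phi> \<Longrightarrow> \<exists>C. \<forall>v\<in>box k R. \<bar>\<phi> v\<bar> \<le> C"
  unfolding goods_def by (elim conjE allE)

lemma goods_uc: "goods k \<phi> \<Longrightarrow> \<epsilon> > 0 \<Longrightarrow> \<exists>\<delta>>0. \<forall>v\<in>box k R. \<forall>w\<in>box k R.
        (\<forall>i<k. \<bar>v i - w i\<bar> \<le> \<delta>) \<longrightarrow> \<bar>\<phi> v - \<phi> w\<bar> \<le> \<epsilon>"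
  unfolding goods_def by (elim conjE allE impE)

lemma goodsI:
  assumes "\<And>R. \<exists>C. \<forall>v\<in>box k R. \<bar>\<phi> v\<bar> \<le> C"
    and "\<And>R \<epsilon>. \<epsilon> > 0 \<Longrightarrow> \<exists>\<delta>>0. \<forall>v\<in>box k R. \<forall>w\<in>box k R.
        (\<forall>i<k. \<bar>v i - w i\<bar> \<le> \<delta>) \<longrightarrow> \<bar>\<phi> v - \<phi> w\<bar> \<le> \<epsilon>"
  shows "goods k \<phi>"
  unfolding goods_def using assms by blast

lemma goodm_upd:
  assumes s: "s < k" and g: "goods k \<phi>"
  shows "goodm k (\<lambda>v. v(s := \<phi> v))"
proof (rule goodmI)
  fix R
  obtain C where C: "\<forall>v\<in>box k R. \<bar>\<phi> v\<bar> \<le> C" using goods_bnd[OF g] by blast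
  have "v(s := \<phi> v) \<in> box k (max R C)" if "v \<in> box k R" for v
    using C that s unfolding box_def by (auto simp: le_max_iff_disj)
  then show "\<exists>R'. \<forall>v\<in>box k R. v(s := \<phi> v) \<in> box k R'" by blast
next
  fix R \<epsilon> :: real assume e: "\<epsilon> > 0"
  obtain \<delta> where d: "\<delta> > 0" "\<forall>v\<in>box k R. \<forall>w\<in>box k R. (\<forall>i<k. \<bar>v i - w i\<bar> \<le> \<delta>) \<longrightarrow> \<bar>\<phi> v - \<phi> w\<bar> \<le> \<epsilon>"
    using goods_uc[OF g e] by blast
  show "\<exists>\<delta>>0. \<forall>v\<in>box k R. \<forall>w\<in>box k R. (\<forall>i<k. \<bar>v i - w i\<bar> \<le> \<delta>) \<longrightarrow> (\<forall>i<k. \<bar>(v(s := \<phi> v)) i - (w(s := \<phi> w)) i\<bar> \<le> \<epsilon>)"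
  proof (intro exI[of _ "min \<delta> \<epsilon>"] conjI ballI impI allI)
    show "min \<delta> \<epsilon> > 0" using d e by simp
    fix v w i assume vw: "v \<in> box k R" "w \<in> box k R" "\<forall>i<k. \<bar>v i - w i\<bar> \<le> min \<delta> \<epsilon>" and i: "i < k"
    show "\<bar>(v(s := \<phi> v)) i - (w(s := \<phi> w)) i\<bar> \<le> \<epsilon>"
    proof (cases "i = s")
      case True
      have "\<forall>i<k. \<bar>v i - w i\<bar> \<le> \<delta>" using vw(3) by auto
      then show ?thesis using True d(2) vw(1,2) by simp
    next
      case False then show ?thesis using vw(3) i by auto
    qed
  qed
qed

lemma goods_const: "goods k (\<lambda>v. c)"
  by (rule goodsI) auto

lemma goods_coord: "goods k (\<lambda>v. v j)"
proof (rule goodsI)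
  fix R show "\<exists>C. \<forall>v\<in>box k R. \<bar>v j\<bar> \<le> C"
    by (cases "j < k") (auto simp: box_def intro!: exI[of _ "max R 0"])
next
  fix R \<epsilon> :: real assume "\<epsilon> > 0"
  then show "\<exists>\<delta>>0. \<forall>v\<in>box k R. \<forall>w\<in>box k R. (\<forall>i<k. \<bar>v i - w i\<bar> \<le> \<delta>) \<longrightarrow> \<bar>v j - w j\<bar> \<le> \<epsilon>"
    by (cases "j < k") (auto simp: box_def intro!: exI[of _ \<epsilon>])
qed

lemma goods_add:
  assumes g1: "goods k \<phi>" and g2: "goods k \<psi>"
  shows "goods k (\<lambda>v. \<phi> v + \<psi> v)"
proof (rule goodsI)
  fix R
  obtain C1 where C1: "\<forall>v\<in>box k R. \<bar>\<phi> v\<bar> \<le> C1" using goods_bnd[OF g1] by blast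
  obtain C2 where C2: "\<forall>v\<in>box k R. \<bar>\<psi> v\<bar> \<le> C2" using goods_bnd[OF g2] by blast
  have "\<bar>\<phi> v + \<psi> v\<bar> \<le> C1 + C2" if "v \<in> box k R" for v
    using C1 C2 that abs_triangle_ineq[of "\<phi> v" "\<psi> v"] by force
  then show "\<exists>C. \<forall>v\<in>box k R. \<bar>\<phi> v + \<psi> v\<bar> \<le> C" by blast
next
  fix R \<epsilon> :: real assume e: "\<epsilon> > 0"
  then have e2: "\<epsilon> / 2 > 0" by simp
  obtain d1 where d1: "d1 > 0" "\<forall>v\<in>box k R. \<forall>w\<in>box k R. (\<forall>i<k. \<bar>v i - w i\<bar> \<le> d1) \<longrightarrow> \<bar>\<phi> v - \<phi> w\<bar> \<le> \<epsilon>/2"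
    using goods_uc[OF g1 e2] by blast
  obtain d2 where d2: "d2 > 0" "\<forall>v\<in>box k R. \<forall>w\<in>box k R. (\<forall>i<k. \<bar>v i - w i\<bar> \<le> d2) \<longrightarrow> \<bar>\<psi> v - \<psi> w\<bar> \<le> \<epsilon>/2"
    using goods_uc[OF g2 e2] by blast
  show "\<exists>\<delta>>0. \<forall>v\<in>box k R. \<forall>w\<in>box k R. (\<forall>i<k. \<bar>v i - w i\<bar> \<le> \<delta>) \<longrightarrow> \<bar>\<phi> v + \<psi> v - (\<phi> w + \<psi> w)\<bar> \<le> \<epsilon>"
  proof (intro exI[of _ "min d1 d2"] conjI ballI impI)
    show "min d1 d2 > 0" using d1 d2 by simp
    fix v w assume vw: "v \<in> box k R" "w \<in> box k R" "\<forall>i<k. \<bar>v i - w i\<bar> \<le> min d1 d2"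
    then have "\<bar>\<phi> v - \<phi> w\<bar> \<le> \<epsilon>/2" "\<bar>\<psi> v - \<psi> w\<bar> \<le> \<epsilon>/2"
      using d1(2) d2(2) by auto
    then show "\<bar>\<phi> v + \<psi> v - (\<phi> w + \<psi> w)\<bar> \<le> \<epsilon>" by linarith
  qed
qed

lemma goods_mult:
  assumes g1: "goods k \<phi>" and g2: "goods k \<psi>"
  shows "goods k (\<lambda>v. \<phi> v * \<psi> v)"
proof (rule goodsI)
  fix R
  obtain C1 where C1: "\<forall>v\<in>box k R. \<bar>\<phi> v\<bar> \<le> C1" using goods_bnd[OF g1] by blast
  obtain C2 where C2: "\<forall>v\<in>box k R. \<bar>\<psi> v\<bar> \<le> C2" using goods_bnd[OF g2] by blast
  have "\<bar>\<phi> v * \<psi> v\<bar> \<le> C1 * C2" if "v \<in> box k R" for v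
    using C1 C2 that by (auto simp: abs_mult intro!: mult_mono)
  then show "\<exists>C. \<forall>v\<in>box k R. \<bar>\<phi> v * \<psi> v\<bar> \<le> C" by blast
next
  fix R \<epsilon> :: real assume e: "\<epsilon> > 0"
  obtain C1 where C1: "\<forall>v\<in>box k R. \<bar>\<phi> v\<bar> \<le> C1" using goods_bnd[OF g1] by blast
  obtain C2 where C2: "\<forall>v\<in>box k R. \<bar>\<psi> v\<bar> \<le> C2" using goods_bnd[OF g2] by blast
  define M where "M = max C1 0 + max C2 0 + 1"
  have M: "M > 0" by (simp add: M_def)
  have e2: "\<epsilon> / (2 * M) > 0" using e M by simp
  obtain d1 where d1: "d1 > 0" "\<forall>v\<in>box k R. \<forall>w\<in>box k R. (\<forall>i<k. \<bar>v i - w i\<bar> \<le> d1) \<longrightarrow> \<bar>\<phi> v - \<phi> w\<bar> \<le> \<epsilon> / (2 * M)"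
    using goods_uc[OF g1 e2] by blast
  obtain d2 where d2: "d2 > 0" "\<forall>v\<in>box k R. \<forall>w\<in>box k R. (\<forall>i<k. \<bar>v i - w i\<bar> \<le> d2) \<longrightarrow> \<bar>\<psi> v - \<psi> w\<bar> \<le> \<epsilon> / (2 * M)"
    using goods_uc[OF g2 e2] by blast
  show "\<exists>\<delta>>0. \<forall>v\<in>box k R. \<forall>w\<in>box k R. (\<forall>i<k. \<bar>v i - w i\<bar> \<le> \<delta>) \<longrightarrow> \<bar>\<phi> v * \<psi> v - \<phi> w * \<psi> w\<bar> \<le> \<epsilon>"
  proof (intro exI[of _ "min d1 d2"] conjI ballI impI)
    show "min d1 d2 > 0" using d1 d2 by simp
    fix v w assume vw: "v \<in> box k R" "w \<in> box k R" "\<forall>i<k. \<bar>v i - w i\<bar> \<le> min d1 d2"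
    then have a: "\<bar>\<phi> v - \<phi> w\<bar> \<le> \<epsilon> / (2 * M)" "\<bar>\<psi> v - \<psi> w\<bar> \<le> \<epsilon> / (2 * M)"
      using d1(2) d2(2) by auto
    have b: "\<bar>\<phi> v\<bar> \<le> M" "\<bar>\<psi> w\<bar> \<le> M" using C1 C2 vw by (auto simp: M_def)
    have "\<phi> v * \<psi> v - \<phi> w * \<psi> w = \<phi> v * (\<psi> v - \<psi> w) + \<psi> w * (\<phi> v - \<phi> w)"
      by (simp add: algebra_simps)
    then have "\<bar>\<phi> v * \<psi> v - \<phi> w * \<psi> w\<bar> \<le> \<bar>\<phi> v\<bar> * \<bar>\<psi> v - \<psi> w\<bar> + \<bar>\<psi> w\<bar> * \<bar>\<phi> v - \<phi> w\<bar>"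
      by (metis abs_mult abs_triangle_ineq)
    also have "\<dots> \<le> M * (\<epsilon> / (2 * M)) + M * (\<epsilon> / (2 * M))"
      using a b by (intro add_mono mult_mono) auto
    also have "\<dots> = \<epsilon>" using M by (simp add: field_simps)
    finally show "\<bar>\<phi> v * \<psi> v - \<phi> w * \<psi> w\<bar> \<le> \<epsilon>" .
  qed
qed

lemma goods_sum: "finite A \<Longrightarrow> (\<And>j. j \<in> A \<Longrightarrow> goods k (f j)) \<Longrightarrow> goods k (\<lambda>v. \<Sum>j\<in>A. f j v)"
proof (induction A rule: finite_induct)
  case empty then show ?case by (simp add: goods_const)
next
  case (insert x F)
  then show ?case by (simp add: goods_add)
qed

lemma goods_lin: "goods k (lin k a c)"
proof -
  have "goods k (\<lambda>v. (\<Sum>j<k. a j * v j) + c)"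
    by (intro goods_add goods_const goods_sum goods_mult goods_coord) auto
  then show ?thesis by (simp add: lin_def[abs_def])
qed

context act
begin

lemma goods_\<sigma>:
  assumes g: "goods k \<phi>"
  shows "goods k (\<lambda>v. \<sigma> (\<phi> v))"
proof (rule goodsI)
  fix R
  obtain C where C: "\<forall>v\<in>box k R. \<bar>\<phi> v\<bar> \<le> C" using goods_bnd[OF g] by blast
  have "compact (\<sigma> ` {-C..C})"
    by (intro compact_continuous_image continuous_on_subset[OF cont]) auto
  then obtain M where M: "\<forall>x\<in>\<sigma> ` {-C..C}. \<bar>x\<bar> \<le> M" using compact_imp_bounded bounded_real by metis
  have "\<bar>\<sigma> (\<phi> v)\<bar> \<le> M" if "v \<in> box k R" for v
    using C that M by (auto simp: abs_le_iff)
  then show "\<exists>C. \<forall>v\<in>box k R. \<bar>\<sigma> (\<phi> v)\<bar> \<le> C" by blast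
next
  fix R \<epsilon> :: real assume e: "\<epsilon> > 0"
  obtain C where C: "\<forall>v\<in>box k R. \<bar>\<phi> v\<bar> \<le> C" using goods_bnd[OF g] by blast
  have "uniformly_continuous_on {-C..C} \<sigma>"
    by (intro compact_uniformly_continuous continuous_on_subset[OF cont]) auto
  then obtain d where d: "d > 0" "\<forall>x\<in>{-C..C}. \<forall>x'\<in>{-C..C}. dist x' x < d \<longrightarrow> dist (\<sigma> x') (\<sigma> x) < \<epsilon>"
    using e unfolding uniformly_continuous_on_def by blast
  have d2: "d / 2 > 0" using d by simp
  obtain d1 where d1: "d1 > 0" "\<forall>v\<in>box k R. \<forall>w\<in>box k R. (\<forall>i<k. \<bar>v i - w i\<bar> \<le> d1) \<longrightarrow> \<bar>\<phi> v - \<phi> w\<bar> \<le> d / 2"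
    using goods_uc[OF g d2] by blast
  show "\<exists>\<delta>>0. \<forall>v\<in>box k R. \<forall>w\<in>box k R. (\<forall>i<k. \<bar>v i - w i\<bar> \<le> \<delta>) \<longrightarrow> \<bar>\<sigma> (\<phi> v) - \<sigma> (\<phi> w)\<bar> \<le> \<epsilon>"
  proof (intro exI[of _ d1] conjI ballI impI d1(1))
    fix v w assume vw: "v \<in> box k R" "w \<in> box k R" "\<forall>i<k. \<bar>v i - w i\<bar> \<le> d1"
    then have "\<bar>\<phi> v - \<phi> w\<bar> \<le> d / 2" using d1(2) by blast
    then have "dist (\<phi> v) (\<phi> w) < d" using d by (simp add: dist_real_def)
    moreover have "\<phi> v \<in> {-C..C}" "\<phi> w \<in> {-C..C}" using C vw by (auto simp: abs_le_iff)
    ultimately have "dist (\<sigma> (\<phi> v)) (\<sigma> (\<phi> w)) < \<epsilon>" using d(2) by blast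
    then show "\<bar>\<sigma> (\<phi> v) - \<sigma> (\<phi> w)\<bar> \<le> \<epsilon>" by (simp add: dist_real_def)
  qed
qed

definition approx :: "nat \<Rightarrow> ((nat \<Rightarrow> real) \<Rightarrow> (nat \<Rightarrow> real)) \<Rightarrow> bool" where
  "approx k \<Psi> \<longleftrightarrow> (\<forall>R \<eta>. \<eta> > 0 \<longrightarrow> (\<exists>\<Phi>. is_network \<sigma> k k k \<Phi> \<and>
      (\<forall>v\<in>box k R. \<forall>i<k. \<bar>\<Phi> v i - \<Psi> v i\<bar> \<le> \<eta>)))"

lemma approxD: "approx k \<Psi> \<Longrightarrow> \<eta> > 0 \<Longrightarrow> \<exists>\<Phi>. is_network \<sigma> k k k \<Phi> \<and>
      (\<forall>v\<in>box k R. \<forall>i<k. \<bar>\<Phi> v i - \<Psi> v i\<bar> \<le> \<eta>)"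
  unfolding approx_def by blast

lemma approxI: "(\<And>R \<eta>. \<eta> > 0 \<Longrightarrow> \<exists>\<Phi>. is_network \<sigma> k k k \<Phi> \<and>
      (\<forall>v\<in>box k R. \<forall>i<k. \<bar>\<Phi> v i - \<Psi> v i\<bar> \<le> \<eta>)) \<Longrightarrow> approx k \<Psi>"
  unfolding approx_def by blast

lemma net_out_zero: "is_network \<sigma> n m w \<Phi> \<Longrightarrow> m \<le> i \<Longrightarrow> \<Phi> x i = 0"
  unfolding is_network_def affine_map_def by auto

lemma approx_comp:
  assumes a1: "approx k \<Psi>1" and a2: "approx k \<Psi>2" and g1: "goodm k \<Psi>1" and g2: "goodm k \<Psi>2"
  shows "approx k (\<lambda>v. \<Psi>2 (\<Psi>1 v))"
proof (rule approxI)
  fix R \<eta> :: real assume e: "\<eta> > 0"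
  then have e2: "\<eta> / 2 > 0" by simp
  obtain R' where R': "\<forall>v\<in>box k R. \<Psi>1 v \<in> box k R'" using goodm_bnd[OF g1] by blast
  obtain \<delta> where d: "\<delta> > 0" "\<forall>v\<in>box k (R' + 1). \<forall>w\<in>box k (R' + 1). (\<forall>i<k. \<bar>v i - w i\<bar> \<le> \<delta>) \<longrightarrow> (\<forall>i<k. \<bar>\<Psi>2 v i - \<Psi>2 w i\<bar> \<le> \<eta> / 2)"
    using goodm_uc[OF g2 e2] by blast
  have md: "min \<delta> 1 > 0" using d by simp
  obtain \<Phi>1 where P1: "is_network \<sigma> k k k \<Phi>1" "\<forall>v\<in>box k R. \<forall>i<k. \<bar>\<Phi>1 v i - \<Psi>1 v i\<bar> \<le> min \<delta> 1"
    using approxD[OF a1 md] by blast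
  obtain \<Phi>2 where P2: "is_network \<sigma> k k k \<Phi>2" "\<forall>v\<in>box k (R' + 1). \<forall>i<k. \<bar>\<Phi>2 v i - \<Psi>2 v i\<bar> \<le> \<eta> / 2"
    using approxD[OF a2 e2] by blast
  show "\<exists>\<Phi>. is_network \<sigma> k k k \<Phi> \<and> (\<forall>v\<in>box k R. \<forall>i<k. \<bar>\<Phi> v i - \<Psi>2 (\<Psi>1 v) i\<bar> \<le> \<eta>)"
  proof (intro exI[of _ "\<lambda>x. \<Phi>2 (\<Phi>1 x)"] conjI ballI allI impI)
    show "is_network \<sigma> k k k (\<lambda>x. \<Phi>2 (\<Phi>1 x))" by (rule is_network_comp[OF P1(1) P2(1)])
    fix v i assume v: "v \<in> box k R" and i: "i < k"
    have inb: "\<Psi>1 v \<in> box k (R' + 1)" using R' v box_mono by force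
    have "\<Phi>1 v \<in> box k (R' + 1)"
    proof -
      have "\<bar>\<Phi>1 v j\<bar> \<le> R' + 1" if "j < k" for j
      proof -
        have "\<bar>\<Phi>1 v j - \<Psi>1 v j\<bar> \<le> 1" using P1(2) v that by fastforce
        moreover have "\<bar>\<Psi>1 v j\<bar> \<le> R'" using R' v that by (auto simp: box_def)
        ultimately show ?thesis by linarith
      qed
      moreover have "\<Phi>1 v j = 0" if "k \<le> j" for j using net_out_zero[OF P1(1) that] .
      ultimately show ?thesis by (auto simp: box_def)
    qed
    moreover have "\<forall>j<k. \<bar>\<Phi>1 v j - \<Psi>1 v j\<bar> \<le> \<delta>" using P1(2) v by fastforce
    ultimately have A: "\<bar>\<Psi>2 (\<Phi>1 v) i - \<Psi>2 (\<Psi>1 v) i\<bar> \<le> \<eta> / 2" using d(2) inb i by blast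
    have B: "\<bar>\<Phi>2 (\<Phi>1 v) i - \<Psi>2 (\<Phi>1 v) i\<bar> \<le> \<eta> / 2" using P2(2) \<open>\<Phi>1 v \<in> box k (R' + 1)\<close> i by blast
    show "\<bar>\<Phi>2 (\<Phi>1 v) i - \<Psi>2 (\<Psi>1 v) i\<bar> \<le> \<eta>" using A B by linarith
  qed
qed

lemma approx_limit:
  assumes "\<And>R \<eta>. \<eta> > 0 \<Longrightarrow> \<exists>\<Psi>'. approx k \<Psi>' \<and> (\<forall>v\<in>box k R. \<forall>i<k. \<bar>\<Psi>' v i - \<Psi> v i\<bar> \<le> \<eta>)"
  shows "approx k \<Psi>"
proof (rule approxI)
  fix R \<eta> :: real assume e: "\<eta> > 0"
  then have e2: "\<eta> / 2 > 0" by simp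
  obtain \<Psi>' where a: "approx k \<Psi>'" "\<forall>v\<in>box k R. \<forall>i<k. \<bar>\<Psi>' v i - \<Psi> v i\<bar> \<le> \<eta> / 2"
    using assms[OF e2] by blast
  obtain \<Phi> where P: "is_network \<sigma> k k k \<Phi>" "\<forall>v\<in>box k R. \<forall>i<k. \<bar>\<Phi> v i - \<Psi>' v i\<bar> \<le> \<eta> / 2"
    using approxD[OF a(1) e2] by blast
  have "\<forall>v\<in>box k R. \<forall>i<k. \<bar>\<Phi> v i - \<Psi> v i\<bar> \<le> \<eta>"
  proof (intro ballI allI impI)
    fix v i assume "v \<in> box k R" "i < k"
    then have "\<bar>\<Phi> v i - \<Psi>' v i\<bar> \<le> \<eta> / 2" "\<bar>\<Psi>' v i - \<Psi> v i\<bar> \<le> \<eta> / 2" using P(2) a(2) by auto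
    then show "\<bar>\<Phi> v i - \<Psi> v i\<bar> \<le> \<eta>" by linarith
  qed
  then show "\<exists>\<Phi>. is_network \<sigma> k k k \<Phi> \<and> (\<forall>v\<in>box k R. \<forall>i<k. \<bar>\<Phi> v i - \<Psi> v i\<bar> \<le> \<eta>)"
    using P(1) by blast
qed

end

lemma sum_delta_mult: "(i::nat) < k \<Longrightarrow> (\<Sum>j<k. (if i = j then x else 0) * v j) = x * (v i :: real)"
proof -
  assume i: "i < k"
  have "(\<Sum>j<k. (if i = j then x else 0) * v j) = (\<Sum>j<k. if j = i then x * v j else 0)"
    by (rule sum.cong) auto
  also have "\<dots> = x * v i" using i by (subst sum.delta) auto
  finally show ?thesis .
qed

context act
begin

lemma approx_prim:
  assumes s: "s < k"
  shows "approx k (\<lambda>v. v(s := (if b then \<sigma> (lin k a c v) else lin k a c v)))"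
proof (rule approxI)
  fix R \<eta> :: real assume e: "\<eta> > 0"
  obtain C where C: "\<forall>v\<in>box k R. \<bar>lin k a c v\<bar> \<le> C" using goods_bnd[OF goods_lin] by blast
  define R2 where "R2 = max (max R C) 1"
  have R2: "R2 > 0" "R \<le> R2" "C \<le> R2" by (auto simp: R2_def)
  obtain \<delta> where d: "\<delta> > 0" "\<forall>x. \<bar>x\<bar> \<le> R2 \<longrightarrow> \<bar>(\<sigma> (t0 + \<delta> * x) - \<sigma> t0) / (\<delta> * deriv \<sigma> t0) - x\<bar> \<le> \<eta>"
    using near_id[OF R2(1) e] by blast
  define d0 where "d0 = deriv \<sigma> t0"
  have d0: "d0 \<noteq> 0" using dnz by (simp add: d0_def)
  define W where "W i j = (if i = s then (if b then a j else \<delta> * a j) else (if i = j then \<delta> else 0))" for i j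
  define bb where "bb i = (if i = s then (if b then c else t0 + \<delta> * c) else t0)" for i
  define Wo where "Wo i j = (if i = j then (if i = s \<and> b then 1 else 1 / (\<delta> * d0)) else 0)" for i j
  define bo where "bo i = (if i = s \<and> b then 0 else - \<sigma> t0 / (\<delta> * d0))" for i
  define \<Phi> where "\<Phi> v = affine_map Wo bo k k (hidden_eval \<sigma> k [(W, bb, k)] v)" for v
  have net: "is_network \<sigma> k k k \<Phi>"
    unfolding is_network_def \<Phi>_def[abs_def] by (intro exI[of _ "[(W, bb, k)]"] exI[of _ Wo] exI[of _ bo]) auto
  have am: "affine_map W bb k k v i = (if i = s then (if b then lin k a c v else t0 + \<delta> * lin k a c v) else t0 + \<delta> * v i)"
    if i: "i < k" for v i
  proof (cases "i = s")
    case True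
    then show ?thesis using i
      by (auto simp: affine_map_def W_def bb_def lin_def sum_distrib_left algebra_simps)
  next
    case False
    have "(\<Sum>j<k. W i j * v j) = \<delta> * v i" using False sum_delta_mult[OF i] by (simp add: W_def)
    then show ?thesis using i False by (simp add: affine_map_def bb_def)
  qed
  have out: "\<Phi> v i = Wo i i * \<sigma> (affine_map W bb k k v i) + bo i" if i: "i < k" for v i
  proof -
    have "\<Phi> v i = (\<Sum>j<k. Wo i j * (if j < k then \<sigma> (affine_map W bb k k v j) else 0)) + bo i"
      using i by (simp add: \<Phi>_def affine_map_def)
    also have "(\<Sum>j<k. Wo i j * (if j < k then \<sigma> (affine_map W bb k k v j) else 0)) =
        (\<Sum>j<k. (if i = j then Wo i i else 0) * \<sigma> (affine_map W bb k k v j))"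
      by (rule sum.cong) (auto simp: Wo_def)
    also have "\<dots> = Wo i i * \<sigma> (affine_map W bb k k v i)" by (rule sum_delta_mult[OF i])
    finally show ?thesis .
  qed
  have nid: "\<bar>Wo i i * \<sigma> (t0 + \<delta> * x) + bo i - x\<bar> \<le> \<eta>" if "\<bar>x\<bar> \<le> R2" "\<not> (i = s \<and> b)" for i x
  proof -
    have w: "Wo i i = 1 / (\<delta> * d0)" "bo i = - \<sigma> t0 / (\<delta> * d0)" using that(2) by (auto simp: Wo_def bo_def)
    have "Wo i i * \<sigma> (t0 + \<delta> * x) + bo i = (\<sigma> (t0 + \<delta> * x) - \<sigma> t0) / (\<delta> * deriv \<sigma> t0)"
      unfolding w by (simp add: d0_def diff_divide_distrib)
    then show ?thesis using d(2) that(1) by simp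
  qed
  have "\<bar>\<Phi> v i - (v(s := (if b then \<sigma> (lin k a c v) else lin k a c v))) i\<bar> \<le> \<eta>"
    if v: "v \<in> box k R" and i: "i < k" for v i
  proof (cases "i = s")
    case True
    have lc: "\<bar>lin k a c v\<bar> \<le> R2" using C v R2 by force
    show ?thesis
    proof (cases b)
      case True
      then show ?thesis using \<open>i = s\<close> i e by (simp add: out am Wo_def bo_def)
    next
      case False
      then show ?thesis using \<open>i = s\<close> i nid[OF lc] by (simp add: out am)
    qed
  next
    case False
    have "\<bar>v i\<bar> \<le> R2" using v i R2 by (auto simp: box_def)
    then show ?thesis using False i nid[of "v i" i] by (simp add: out am)
  qed
  then show "\<exists>\<Phi>. is_network \<sigma> k k k \<Phi> \<and> (\<forall>v\<in>box k R. \<forall>i<k. \<bar>\<Phi> v i - (v(s := (if b then \<sigma> (lin k a c v) else lin k a c v))) i\<bar> \<le> \<eta>)"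
    using net by blast
qed

end

datatype ins = Aff nat "nat \<Rightarrow> real" real | Sig nat "nat \<Rightarrow> real" real | Sq nat nat "nat \<Rightarrow> real" real real

fun wf :: "nat \<Rightarrow> ins \<Rightarrow> bool" where
  "wf k (Aff s a c) = (s < k)"
| "wf k (Sig s a c) = (s < k)"
| "wf k (Sq t s a c l) = (t < k \<and> s < k \<and> t \<noteq> s \<and> a t = 0 \<and> a s = 0)"

lemma lin_upd: "a s = 0 \<Longrightarrow> lin k a c (v(s := x)) = lin k a c v"
  unfolding lin_def by (intro arg_cong2[where f="(+)"] sum.cong) auto

lemma lin_scale: "lin k (\<lambda>i. \<alpha> * a i) (\<alpha> * c + \<beta>) v = \<alpha> * lin k a c v + \<beta>"
  unfolding lin_def by (simp add: sum_distrib_left algebra_simps)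

lemma lin_two:
  assumes "t < k" "s < k" "t \<noteq> s"
  shows "lin k (\<lambda>i. if i = t then x else if i = s then y else 0) c v = x * v t + y * v s + c"
proof -
  have "(\<Sum>j<k. (if j = t then x else if j = s then y else 0) * v j) =
        (\<Sum>j<k. (if t = j then x else 0) * v j) + (\<Sum>j<k. (if s = j then y else 0) * v j)"
    unfolding sum.distrib[symmetric] by (rule sum.cong) (use assms in auto)
  then show ?thesis using assms by (simp add: lin_def sum_delta_mult)
qed

lemma lin_one: "t < k \<Longrightarrow> lin k (\<lambda>i. if i = t then x else 0) c v = x * v t + c"
  unfolding lin_def by (simp add: sum_delta_mult[of t k x v, symmetric] eq_commute)

lemma lin_zero: "lin k (\<lambda>i. 0) c v = c"
  by (simp add: lin_def)

context act
begin

fun sem :: "nat \<Rightarrow> ins \<Rightarrow> (nat \<Rightarrow> real) \<Rightarrow> (nat \<Rightarrow> real)" where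
  "sem k (Aff s a c) v = v(s := lin k a c v)"
| "sem k (Sig s a c) v = v(s := \<sigma> (lin k a c v))"
| "sem k (Sq t s a c l) v = (v(s := 0))(t := v t + l * (lin k a c v)\<^sup>2)"

fun run :: "nat \<Rightarrow> ins list \<Rightarrow> (nat \<Rightarrow> real) \<Rightarrow> (nat \<Rightarrow> real)" where
  "run k [] v = v"
| "run k (i # P) v = run k P (sem k i v)"

lemma sem_eta: "sem k (Aff s a c) = (\<lambda>v. v(s := lin k a c v))"
  "sem k (Sig s a c) = (\<lambda>v. v(s := \<sigma> (lin k a c v)))"
  by (rule ext, simp)+

lemma run_append: "run k (P @ Q) v = run k Q (run k P v)"
  by (induction P arbitrary: v) auto

lemma goodm_id: "goodm k (\<lambda>v. v)"
  by (rule goodmI) auto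

lemma approx_id: assumes "k > 0" shows "approx k (\<lambda>v. v)"
proof -
  have "approx k (\<lambda>v. v(0 := (if False then \<sigma> (lin k (\<lambda>i. if i = 0 then 1 else 0) 0 v)
         else lin k (\<lambda>i. if i = 0 then 1 else 0) 0 v)))"
    by (rule approx_prim[OF assms])
  moreover have "(\<lambda>v. v(0 := (if False then \<sigma> (lin k (\<lambda>i. if i = 0 then 1 else 0) 0 v)
         else lin k (\<lambda>i. if i = 0 then 1 else 0) 0 v))) = (\<lambda>v. v)"
    using assms by (simp add: lin_one)
  ultimately show ?thesis by simp
qed

lemma run_ok:
  assumes "k > 0" "\<And>i. i \<in> set P \<Longrightarrow> approx k (sem k i) \<and> goodm k (sem k i)"
  shows "approx k (run k P) \<and> goodm k (run k P)"
  using assms(2)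
proof (induction P)
  case Nil
  have "run k [] = (\<lambda>v. v)" by (rule ext) simp
  then show ?case using approx_id[OF assms(1)] goodm_id by simp
next
  case (Cons i P)
  then have ih: "approx k (run k P)" "goodm k (run k P)" and hi: "approx k (sem k i)" "goodm k (sem k i)"
    by auto
  have "run k (i # P) = (\<lambda>v. run k P (sem k i v))" by (rule ext) simp
  then show ?case using approx_comp[OF hi(1) ih(1) hi(2) ih(2)] goodm_comp[OF hi(2) ih(2)] by simp
qed

lemma good_ins: "wf k ins \<Longrightarrow> goodm k (sem k ins)"
proof (cases ins)
  case (Aff s a c)
  assume "wf k ins"
  then show ?thesis using Aff by (simp add: goodm_upd goods_lin sem_eta)
next
  case (Sig s a c)
  assume "wf k ins"
  then show ?thesis using Sig by (simp add: goodm_upd goods_lin goods_\<sigma> sem_eta)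
next
  case (Sq t s a c l)
  assume w: "wf k ins"
  then have w': "t < k" "s < k" "t \<noteq> s" "a t = 0" "a s = 0" using Sq by auto
  have g1: "goodm k (\<lambda>v. v(s := 0))" using w' by (simp add: goodm_upd goods_const)
  have g2: "goodm k (\<lambda>v. v(t := v t + l * (lin k a c v * lin k a c v)))"
    using w' by (intro goodm_upd goods_add goods_coord goods_mult goods_const goods_lin)
  have "sem k ins = (\<lambda>v. (\<lambda>v. v(t := v t + l * (lin k a c v * lin k a c v))) ((\<lambda>v. v(s := 0)) v))"
    using Sq w' by (auto simp: lin_upd power2_eq_square)
  then show ?thesis using goodm_comp[OF g1 g2] by simp
qed

lemma approx_aff: "s < k \<Longrightarrow> approx k (sem k (Aff s a c))"
  using approx_prim[of s k False a c] by (simp add: sem_eta)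

lemma approx_sig: "s < k \<Longrightarrow> approx k (sem k (Sig s a c))"
  using approx_prim[of s k True a c] by (simp add: sem_eta)

end

definition sqterms :: "nat \<Rightarrow> nat \<Rightarrow> (nat \<Rightarrow> real) \<Rightarrow> real \<Rightarrow> real \<Rightarrow> (real \<times> real \<times> real) list \<Rightarrow> ins list" where
  "sqterms t s a c l L = concat (map (\<lambda>(m, \<alpha>, \<beta>). [Sig s (\<lambda>i. \<alpha> * a i) (\<alpha> * c + \<beta>),
       Aff t (\<lambda>i. if i = t then 1 else if i = s then l * m else 0) 0]) L)"

lemma sqterms_simps: "sqterms t s a c l [] = []"
  "sqterms t s a c l ((m, \<alpha>, \<beta>) # L) = [Sig s (\<lambda>i. \<alpha> * a i) (\<alpha> * c + \<beta>),
       Aff t (\<lambda>i. if i = t then 1 else if i = s then l * m else 0) 0] @ sqterms t s a c l L"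
  by (simp_all add: sqterms_def)

context act
begin

lemma cval_Cons: "cval ((m, \<alpha>, \<beta>) # L) y = m * \<sigma> (\<alpha> * y + \<beta>) + cval L y"
  by (simp add: cval_def)

lemma cval_Nil: "cval [] y = 0"
  by (simp add: cval_def)

lemma sqterms_sem:
  assumes w: "t < k" "s < k" "t \<noteq> s" "a t = 0" "a s = 0"
  shows "\<exists>z. run k (sqterms t s a c l L) v = (v(t := v t + l * cval L (lin k a c v)))(s := z)"
proof (induction L arbitrary: v)
  case Nil
  show ?case by (intro exI[of _ "v s"]) (simp add: sqterms_simps cval_Nil)
next
  case (Cons x L)
  obtain m \<alpha> \<beta> where x: "x = (m, \<alpha>, \<beta>)" by (cases x) auto
  define y where "y = lin k a c v"
  define S where "S = \<sigma> (\<alpha> * y + \<beta>)"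
  define v2 where "v2 = (v(s := S))(t := v t + l * m * S)"
  have r1: "run k [Sig s (\<lambda>i. \<alpha> * a i) (\<alpha> * c + \<beta>),
       Aff t (\<lambda>i. if i = t then 1 else if i = s then l * m else 0) 0] v = v2"
    using w by (simp add: lin_scale lin_two S_def y_def v2_def)
  have ly: "lin k a c v2 = y" using w by (simp add: v2_def lin_upd y_def)
  obtain z where z: "run k (sqterms t s a c l L) v2 = (v2(t := v2 t + l * cval L (lin k a c v2)))(s := z)"
    using Cons by blast
  have "run k (sqterms t s a c l (x # L)) v = (v2(t := v2 t + l * cval L (lin k a c v2)))(s := z)"
    by (simp only: x sqterms_simps run_append r1 z)
  also have "\<dots> = (v(t := v t + l * cval (x # L) (lin k a c v)))(s := z)"
    unfolding ly using w by (auto simp: v2_def x cval_Cons S_def y_def algebra_simps)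
  finally show ?case by blast
qed

lemma approx_sq:
  assumes w: "wf k (Sq t s a c l)"
  shows "approx k (sem k (Sq t s a c l))"
proof (rule approx_limit)
  fix R \<eta> :: real assume e: "\<eta> > 0"
  have w': "t < k" "s < k" "t \<noteq> s" "a t = 0" "a s = 0" using w by auto
  have k: "k > 0" using w' by simp
  obtain C where C: "\<forall>v\<in>box k R. \<bar>lin k a c v\<bar> \<le> C" using goods_bnd[OF goods_lin] by blast
  define B where "B = max C 1"
  have B: "B > 0" by (simp add: B_def)
  have e2: "\<eta> / (\<bar>l\<bar> + 1) > 0" using e by simp
  obtain L where L: "\<forall>x. \<bar>x\<bar> \<le> B \<longrightarrow> \<bar>cval L x - x\<^sup>2\<bar> \<le> \<eta> / (\<bar>l\<bar> + 1)"
    using sq_approx[OF B e2] by blast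
  define P where "P = sqterms t s a c l L @ [Aff s (\<lambda>i. 0) 0]"
  have Pins: "approx k (sem k i) \<and> goodm k (sem k i)" if "i \<in> set P" for i
  proof -
    have "wf k i" using that w' by (auto simp: P_def sqterms_def)
    moreover have "\<not> (\<exists>t s a c l. i = Sq t s a c l)" using that by (auto simp: P_def sqterms_def)
    ultimately show ?thesis using good_ins approx_aff approx_sig by (cases i) auto
  qed
  have aP: "approx k (run k P)" using run_ok[OF k Pins] by blast
  have runP: "run k P v = (v(t := v t + l * cval L (lin k a c v)))(s := 0)" for v
  proof -
    obtain z where "run k (sqterms t s a c l L) v = (v(t := v t + l * cval L (lin k a c v)))(s := z)"
      using sqterms_sem[OF w'] by blast
    then show ?thesis by (simp add: P_def run_append lin_zero)
  qed
  have "\<bar>run k P v i - sem k (Sq t s a c l) v i\<bar> \<le> \<eta>" if v: "v \<in> box k R" and i: "i < k" for v i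
  proof (cases "i = t")
    case True
    have yB: "\<bar>lin k a c v\<bar> \<le> B" using C v by (force simp: B_def)
    have "\<bar>run k P v i - sem k (Sq t s a c l) v i\<bar> = \<bar>l\<bar> * \<bar>cval L (lin k a c v) - (lin k a c v)\<^sup>2\<bar>"
      using True w' by (simp add: runP abs_mult[symmetric] algebra_simps)
    also have "\<dots> \<le> \<bar>l\<bar> * (\<eta> / (\<bar>l\<bar> + 1))" using L yB by (intro mult_left_mono) auto
    also have "\<dots> \<le> \<eta>" using e by (simp add: field_simps)
    finally show ?thesis .
  next
    case False
    then show ?thesis using e by (simp add: runP)
  qed
  then show "\<exists>\<Psi>'. approx k \<Psi>' \<and> (\<forall>v\<in>box k R. \<forall>i<k. \<bar>\<Psi>' v i - sem k (Sq t s a c l) v i\<bar> \<le> \<eta>)"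
    using aP by blast
qed

lemma ins_ok: "wf k i \<Longrightarrow> approx k (sem k i) \<and> goodm k (sem k i)"
  using good_ins approx_aff approx_sig approx_sq by (cases i) auto

lemma run_wf: "k > 0 \<Longrightarrow> (\<And>i. i \<in> set P \<Longrightarrow> wf k i) \<Longrightarrow> approx k (run k P)"
  using run_ok ins_ok by blast

end

fun horner :: "real list \<Rightarrow> real \<Rightarrow> real" where
  "horner [] y = 0"
| "horner (c # cs) y = c + y * horner cs y"

definition lin2 :: "nat \<Rightarrow> nat \<Rightarrow> real \<Rightarrow> real \<Rightarrow> nat \<Rightarrow> real" where
  "lin2 a r x y = (\<lambda>i. if i = a then x else if i = r then y else 0)"

fun hprog :: "nat \<Rightarrow> nat \<Rightarrow> nat \<Rightarrow> nat \<Rightarrow> real list \<Rightarrow> ins list" where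
  "hprog r a b s [] = [Aff a (\<lambda>i. 0) 0]"
| "hprog r a b s (c # cs) = hprog r a b s cs @
     [Aff b (\<lambda>i. 0) c, Sq b s (lin2 a r 1 1) 0 (1/4), Sq b s (lin2 a r 1 (-1)) 0 (-1/4),
      Aff a (\<lambda>i. if i = b then 1 else 0) 0]"

lemma hprog_wf:
  assumes "r < k" "a < k" "b < k" "s < k" "distinct [r, a, b, s]"
  shows "i \<in> set (hprog r a b s cs) \<Longrightarrow> wf k i"
  using assms by (induction cs) (auto simp: lin2_def)

context act
begin

lemma hprog_sem:
  assumes k: "r < k" "a < k" "b < k" "s < k" and d: "distinct [r, a, b, s]"
  shows "run k (hprog r a b s cs) v a = horner cs (v r) \<and>
         (\<forall>i. i \<noteq> a \<and> i \<noteq> b \<and> i \<noteq> s \<longrightarrow> run k (hprog r a b s cs) v i = v i)"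
proof (induction cs)
  case Nil
  then show ?case by (simp add: lin_zero)
next
  case (Cons c cs)
  define w where "w = run k (hprog r a b s cs) v"
  have wa: "w a = horner cs (v r)" and wo: "\<And>i. i \<noteq> a \<Longrightarrow> i \<noteq> b \<Longrightarrow> i \<noteq> s \<Longrightarrow> w i = v i"
    using Cons by (auto simp: w_def)
  have wr: "w r = v r" using wo d by auto
  have l1: "lin k (lin2 a r 1 1) 0 u = u a + u r" for u
    using k d by (simp add: lin2_def lin_two)
  have l2: "lin k (lin2 a r 1 (-1)) 0 u = u a - u r" for u
    using k d by (simp add: lin2_def lin_two)
  have l3: "lin k (\<lambda>i. if i = b then 1 else 0) 0 u = u b" for u
    using k by (simp add: lin_one)
  define w' where "w' = run k [Aff b (\<lambda>i. 0) c, Sq b s (lin2 a r 1 1) 0 (1/4), Sq b s (lin2 a r 1 (-1)) 0 (-1/4),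
      Aff a (\<lambda>i. if i = b then 1 else 0) 0] w"
  have eqw: "run k (hprog r a b s (c # cs)) v = w'" by (simp add: run_append w_def w'_def)
  have "w' = (w(b := c + w a * w r, s := 0))(a := c + w a * w r)"
    using d by (simp add: w'_def lin_zero l1 l2 l3 power2_eq_square algebra_simps fun_upd_twist)
  then show ?case unfolding eqw using d wa wr wo by (auto simp: algebra_simps)
qed

end

definition pprog :: "nat \<Rightarrow> nat \<Rightarrow> (nat \<Rightarrow> nat \<Rightarrow> real list) \<Rightarrow> nat \<Rightarrow> nat \<Rightarrow> ins list" where
  "pprog n m cs q i = hprog q (n + m) (if q = 0 then n + i else 0) (n + m + 1) (cs i q) @
     [Aff (n + i) (lin2 (n + i) (n + m) (if q = 0 then 0 else 1) 1) 0]"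

definition qprog :: "nat \<Rightarrow> nat \<Rightarrow> (nat \<Rightarrow> nat \<Rightarrow> real list) \<Rightarrow> nat \<Rightarrow> ins list" where
  "qprog n m cs q = concat (map (pprog n m cs q) [0..<m])"

definition prog :: "nat \<Rightarrow> nat \<Rightarrow> (nat \<Rightarrow> nat \<Rightarrow> real list) \<Rightarrow> ins list" where
  "prog n m cs = concat (map (qprog n m cs) [0..<n])"

lemma prog_wf:
  assumes "x \<in> set (prog n m cs)"
  shows "wf (n + m + 2) x"
proof -
  obtain q i where qi: "q < n" "i < m" "x \<in> set (pprog n m cs q i)"
    using assms by (auto simp: prog_def qprog_def)
  show ?thesis
  proof (cases "x \<in> set (hprog q (n + m) (if q = 0 then n + i else 0) (n + m + 1) (cs i q))")
    case True
    show ?thesis by (rule hprog_wf[OF _ _ _ _ _ True]) (use qi in auto)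
  next
    case False
    then show ?thesis using qi by (auto simp: pprog_def)
  qed
qed

context act
begin

lemma run_concat_inv:
  assumes "\<And>j w. j < N \<Longrightarrow> I j w \<Longrightarrow> I (Suc j) (run k (f j) w)" "I 0 v"
  shows "I N (run k (concat (map f [0..<N])) v)"
  using assms(1)
proof (induction N)
  case 0
  then show ?case using assms(2) by simp
next
  case (Suc N)
  then show ?case by (simp add: run_append)
qed

lemma pprog_step:
  assumes q: "q < n" and p: "p < m"
    and J: "\<forall>i<m. w (n + i) = T i + (if i < p then horner (cs i q) (y q) else 0)"
    and T0: "q = 0 \<Longrightarrow> \<forall>i<m. T i = 0"
    and reg: "\<forall>j. q \<le> j \<and> j < n \<longrightarrow> w j = y j"
  shows "(\<forall>i<m. run (n + m + 2) (pprog n m cs q p) w (n + i) =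
              T i + (if i < Suc p then horner (cs i q) (y q) else 0)) \<and>
         (\<forall>j. q \<le> j \<and> j < n \<longrightarrow> run (n + m + 2) (pprog n m cs q p) w j = y j)"
proof -
  define k where "k = n + m + 2"
  define bs where "bs = (if q = 0 then n + p else 0)"
  define u where "u = run k (hprog q (n + m) bs (n + m + 1) (cs p q)) w"
  have d: "distinct [q, n + m, bs, n + m + 1]" using q p by (auto simp: bs_def)
  have hs: "u (n + m) = horner (cs p q) (w q)"
     "\<And>j. j \<noteq> n + m \<Longrightarrow> j \<noteq> bs \<Longrightarrow> j \<noteq> n + m + 1 \<Longrightarrow> u j = w j"
    using hprog_sem[of q k "n + m" bs "n + m + 1" "cs p q" w, OF _ _ _ _ d] q p
    by (auto simp: u_def k_def bs_def)
  have wq: "w q = y q" using reg q by auto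
  have fin0: "run k (pprog n m cs q p) w = u(n + p := (if q = 0 then 0 else 1) * u (n + p) + u (n + m))"
    using p by (simp add: pprog_def run_append u_def bs_def lin2_def lin_two k_def)
  have fin: "run (n + m + 2) (pprog n m cs q p) w = u(n + p := (if q = 0 then 0 else 1) * u (n + p) + u (n + m))"
    using fin0 by (simp add: k_def)
  show ?thesis
  proof (intro conjI allI impI)
    fix i assume i: "i < m"
    show "run (n + m + 2) (pprog n m cs q p) w (n + i) = T i + (if i < Suc p then horner (cs i q) (y q) else 0)"
    proof (cases "i = p")
      case True
      show ?thesis
      proof (cases "q = 0")
        case True
        then show ?thesis using \<open>i = p\<close> T0 i hs(1) wq unfolding fin by simp
      next
        case False
        have "u (n + p) = w (n + p)" using hs(2) False p q by (simp add: bs_def)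
        then show ?thesis using \<open>i = p\<close> False J p hs(1) wq unfolding fin by simp
      qed
    next
      case False
      have "u (n + i) = w (n + i)" using hs(2) False i p q by (simp add: bs_def)
      then show ?thesis using False J i unfolding fin by simp
    qed
  next
    fix j assume j: "q \<le> j \<and> j < n"
    have "u j = w j" using hs(2) j by (auto simp: bs_def)
    then show "run (n + m + 2) (pprog n m cs q p) w j = y j" using j reg unfolding fin by simp
  qed
qed

lemma prog_sem:
  assumes y: "\<And>j. n \<le> j \<Longrightarrow> y j = 0" and i: "i < m"
  shows "run (n + m + 2) (prog n m cs) y (n + i) = (\<Sum>q<n. horner (cs i q) (y q))"
proof -
  define k where "k = n + m + 2"
  define T where "T i q = (\<Sum>q'<q. horner (cs i q') (y q'))" for i q
  define I where "I q w \<longleftrightarrow> (\<forall>i<m. w (n + i) = T i q) \<and> (\<forall>j. q \<le> j \<and> j < n \<longrightarrow> w j = y j)" for q w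
  have step: "I (Suc q) (run k (qprog n m cs q) w)" if q: "q < n" and Iw: "I q w" for q w
  proof -
    define J where "J i0 u \<longleftrightarrow> (\<forall>i<m. u (n + i) = T i q + (if i < i0 then horner (cs i q) (y q) else 0)) \<and>
        (\<forall>j. q \<le> j \<and> j < n \<longrightarrow> u j = y j)" for i0 u
    have "J m (run k (concat (map (pprog n m cs q) [0..<m])) w)"
    proof (rule run_concat_inv)
      fix i0 u assume "i0 < m" "J i0 u"
      then show "J (Suc i0) (run k (pprog n m cs q i0) u)"
        unfolding J_def k_def using pprog_step[OF q, where p=i0 and w=u and T="\<lambda>i. T i q" and cs=cs and y=y and m=m] by (auto simp: T_def)
    next
      show "J 0 w" using Iw by (simp add: J_def I_def)
    qed
    then show ?thesis by (auto simp: J_def I_def T_def qprog_def)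
  qed
  have "I n (run k (concat (map (qprog n m cs) [0..<n])) y)"
  proof (rule run_concat_inv)
    show "I 0 y" using y by (simp add: I_def T_def)
  qed (rule step)
  then show ?thesis using i by (simp add: I_def T_def prog_def k_def)
qed

end

lemma affine_input:
  assumes "n \<le> k" "\<And>j. n \<le> j \<Longrightarrow> y j = 0"
  shows "affine_map W b n k1 y = affine_map W b k k1 y"
proof -
  have eq: "(\<Sum>j<k. W i j * y j) = (\<Sum>j<n. W i j * y j)" for i
    by (rule sum.mono_neutral_right) (use assms in auto)
  show ?thesis by (rule ext) (simp add: affine_map_def eq)
qed

lemma hidden_input:
  assumes "n \<le> k" "\<And>j. n \<le> j \<Longrightarrow> y j = 0"
  shows "hidden_eval \<sigma> n Ls y = hidden_eval \<sigma> k Ls y"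
proof (cases Ls)
  case Nil then show ?thesis by simp
next
  case (Cons L Ls')
  obtain W b k1 where LW: "L = (W, b, k1)" by (cases L) auto
  have eq: "affine_map W b n k1 y = affine_map W b k k1 y" by (rule affine_input[OF assms])
  show ?thesis unfolding local.Cons LW hidden_eval.simps by (subst eq) (rule refl)
qed

lemma horner_sum: "horner (map a [j..<j + N]) x = (\<Sum>i<N. a (j + i) * x ^ i)"
proof (induction N arbitrary: j)
  case 0 then show ?case by simp
next
  case (Suc N)
  have e: "[j..<j + Suc N] = j # [Suc j..<Suc j + N]" by (simp add: upt_conv_Cons)
  have "horner (map a [j..<j + Suc N]) x = a j + x * horner (map a [Suc j..<Suc j + N]) x"
    unfolding e by simp
  also have "\<dots> = a j + x * (\<Sum>i<N. a (Suc j + i) * x ^ i)" by (simp only: Suc.IH)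
  also have "\<dots> = (\<Sum>i<Suc N. a (j + i) * x ^ i)"
    by (subst sum.lessThan_Suc_shift) (simp add: sum_distrib_left algebra_simps)
  finally show ?case .
qed

context act
begin

lemma net_exists:
  assumes n: "n > 0" and R: "R > 0" and eta: "\<eta> > 0"
  shows "\<exists>\<Phi>. is_network \<sigma> n m (n + m + 2) \<Phi> \<and>
     (\<forall>y. (\<forall>j<n. \<bar>y j\<bar> \<le> R) \<and> (\<forall>j. n \<le> j \<longrightarrow> y j = 0) \<longrightarrow>
        (\<forall>i<m. \<bar>\<Phi> y i - (\<Sum>q<n. horner (cs i q) (y q))\<bar> \<le> \<eta>))"
proof -
  define k where "k = n + m + 2"
  have k: "k > 0" by (simp add: k_def)
  have "approx k (run k (prog n m cs))"
    using run_wf[OF k] prog_wf unfolding k_def by blast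
  then obtain \<Phi>0 where P0: "is_network \<sigma> k k k \<Phi>0" "\<forall>v\<in>box k R. \<forall>i<k. \<bar>\<Phi>0 v i - run k (prog n m cs) v i\<bar> \<le> \<eta>"
    using approxD[OF _ eta] by blast
  obtain Ls Wo bo where L: "Ls \<noteq> []" "\<forall>(W, b, kj)\<in>set Ls. kj \<le> k"
    "\<Phi>0 = (\<lambda>x. affine_map Wo bo (snd (snd (last Ls))) k (hidden_eval \<sigma> k Ls x))"
    using P0(1) unfolding is_network_def by blast
  define \<Phi> where "\<Phi> x = affine_map (\<lambda>i j. Wo (n + i) j) (\<lambda>i. bo (n + i)) (snd (snd (last Ls))) m (hidden_eval \<sigma> n Ls x)" for x
  have net: "is_network \<sigma> n m k \<Phi>"
    unfolding is_network_def \<Phi>_def[abs_def] using L by blast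
  have "\<bar>\<Phi> y i - (\<Sum>q<n. horner (cs i q) (y q))\<bar> \<le> \<eta>"
    if y: "\<forall>j<n. \<bar>y j\<bar> \<le> R" "\<forall>j. n \<le> j \<longrightarrow> y j = 0" and i: "i < m" for y i
  proof -
    have "hidden_eval \<sigma> n Ls y = hidden_eval \<sigma> k Ls y"
      by (rule hidden_input) (use y in \<open>auto simp: k_def\<close>)
    then have "\<Phi> y i = \<Phi>0 y (n + i)" using i by (simp add: \<Phi>_def L(3) affine_map_def k_def)
    moreover have "y \<in> box k R"
    proof -
      have "\<bar>y j\<bar> \<le> R" for j by (cases "j < n") (use y R in auto)
      then show ?thesis using y by (auto simp: box_def k_def)
    qed
    moreover have "run k (prog n m cs) y (n + i) = (\<Sum>q<n. horner (cs i q) (y q))"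
      unfolding k_def by (rule prog_sem) (use y i in auto)
    moreover have "n + i < k" using i by (simp add: k_def)
    ultimately show ?thesis using P0(2) by metis
  qed
  then show ?thesis using net unfolding k_def by blast
qed

end

theorem theorem3p4:
  fixes n0 :: nat
    and X :: "nat \<Rightarrow> 'a::metric_space set"
    and d :: "nat \<Rightarrow> nat"
    and M :: nat
    and \<psi> :: "nat \<Rightarrow> nat \<Rightarrow> 'a \<Rightarrow> real"
    and s :: "nat \<Rightarrow> (nat \<Rightarrow> 'a) \<Rightarrow> real"
    and F :: "(nat \<Rightarrow> 'a) \<Rightarrow> (nat \<Rightarrow> real)"
    and \<A> :: "((nat \<Rightarrow> 'a) \<Rightarrow> real) set"
    and \<sigma> :: "real \<Rightarrow> real"
    and t0 :: real and U :: "real set"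
    and m :: nat and K :: "(nat \<Rightarrow> 'a) set"
    and g :: "(nat \<Rightarrow> 'a) \<Rightarrow> (nat \<Rightarrow> real)"
    and \<epsilon> :: real
  assumes n0_pos: "n0 \<ge> 1"
    and X_compact: "\<And>p. p < n0 \<Longrightarrow> compact (X p)"
    and X_dim: "\<And>p. p < n0 \<Longrightarrow> has_top_dim (X p) (d p)"
    and M_def: "M = (\<Sum>p<n0. d p)"
    and \<psi>_cont: "\<And>p q. p < n0 \<Longrightarrow> q < 2*M+1 \<Longrightarrow> continuous_on (X p) (\<psi> p q)"
    and \<psi>_range: "\<And>p q. p < n0 \<Longrightarrow> q < 2*M+1 \<Longrightarrow> \<psi> p q ` X p \<subseteq> {0..1}"
    and KA: "\<And>f. continuous_on (PiE {..<n0} X) f \<Longrightarrow>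
               (\<exists>h :: nat \<Rightarrow> real \<Rightarrow> real. (\<forall>q<2*M+1. continuous_on UNIV (h q)) \<and>
                  (\<forall>x\<in>PiE {..<n0} X. f x = (\<Sum>q<2*M+1. h q (\<Sum>p<n0. \<psi> p q (x p)))))"
    and s_def: "\<And>q x. s q x = (\<Sum>p<n0. \<psi> p q (x p))"
    and F_def: "\<And>x. F x = (\<lambda>q. if q < 2*M+1 then s q x else 0)"
    and A_sub: "\<forall>f\<in>\<A>. continuous_on (PiE {..<n0} X) f"
    and A_s: "\<And>q. q < 2*M+1 \<Longrightarrow> s q \<in> \<A>"
    and \<sigma>_cont: "continuous_on UNIV \<sigma>"
    and \<sigma>_nonaffine: "\<not> (\<exists>a b. \<forall>t. \<sigma> t = a * t + b)"
    and U_open: "open U" and t0_U: "t0 \<in> U"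
    and \<sigma>_diff: "\<And>t. t \<in> U \<Longrightarrow> \<sigma> differentiable (at t)"
    and \<sigma>'_cont: "isCont (deriv \<sigma>) t0"
    and \<sigma>'_nz: "deriv \<sigma> t0 \<noteq> 0"
    and m_pos: "m \<ge> 1"
    and K_compact: "compact K" and K_sub: "K \<subseteq> PiE {..<n0} X"
    and g_cont: "\<And>i. i < m \<Longrightarrow> continuous_on K (\<lambda>x. g x i)"
    and \<epsilon>_pos: "\<epsilon> > 0"
  shows "\<exists>H \<in> NN (2*M+m+3) m (PiE {..<n0} X) \<sigma> (2*M+1) F.
           \<exists>\<delta> < \<epsilon>. \<forall>x\<in>K. euclid_norm m (\<lambda>i. g x i - H x i) \<le> \<delta>"
proof -
  interpret act \<sigma> t0 U
    using \<sigma>_cont \<sigma>_nonaffine U_open t0_U \<sigma>_diff \<sigma>'_cont \<sigma>'_nz by unfold_locales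
  define n where "n = 2 * M + 1"
  define T where "T = PiE {..<n0} X"
  have npos: "n > 0" by (simp add: n_def)
  have ext: "\<exists>G. i < m \<longrightarrow> continuous_on T G \<and> (\<forall>x\<in>K. G x = g x i)" for i
  proof (cases "i < m")
    case True
    have normal: "normal_space (top_of_set T)"
      by (intro metrizable_imp_normal_space metrizable_space_subtopology metrizable_space_euclidean)
    have closed: "closedin (top_of_set T) K"
      using closed_subset[OF K_sub compact_imp_closed[OF K_compact]] by (simp add: T_def)
    have "continuous_map (subtopology (top_of_set T) K) euclideanreal (\<lambda>x. g x i)"
    proof -
      have "T \<inter> K = K" using K_sub by (auto simp: T_def)
      then show ?thesis using g_cont[OF True] by (simp add: subtopology_subtopology)
    qed
    then obtain G where G: "continuous_map (top_of_set T) euclideanreal G" "\<And>x. x \<in> K \<Longrightarrow> G x = g x i"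
      using Tietze_extension_realinterval[OF normal closed, of UNIV "\<lambda>x. g x i"] by auto
    then show ?thesis by (intro exI[of _ G]) auto
  qed auto
  then obtain Gs where Gs: "\<And>i. i < m \<Longrightarrow> continuous_on T (Gs i) \<and> (\<forall>x\<in>K. Gs i x = g x i)"
    using choice[of "\<lambda>i G. i < m \<longrightarrow> continuous_on T G \<and> (\<forall>x\<in>K. G x = g x i)"] by blast
  have "\<exists>h. i < m \<longrightarrow> (\<forall>q<2*M+1. continuous_on UNIV (h q)) \<and>
                  (\<forall>x\<in>T. Gs i x = (\<Sum>q<2*M+1. h q (\<Sum>p<n0. \<psi> p q (x p))))" for i
    using KA Gs unfolding T_def by blast
  then obtain hs where hs: "\<And>i. i < m \<Longrightarrow> (\<forall>q<n. continuous_on UNIV (hs i q)) \<and>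
                  (\<forall>x\<in>T. Gs i x = (\<Sum>q<n. hs i q (\<Sum>p<n0. \<psi> p q (x p))))"
    using choice[of "\<lambda>i h. i < m \<longrightarrow> (\<forall>q<2*M+1. continuous_on UNIV (h q)) \<and>
                  (\<forall>x\<in>T. Gs i x = (\<Sum>q<2*M+1. h q (\<Sum>p<n0. \<psi> p q (x p))))"] unfolding n_def by blast
  define E where "E = \<epsilon> / (2 * real m)"
  have E: "E > 0" using \<epsilon>_pos m_pos by (simp add: E_def)
  define \<eta>' where "\<eta>' = E / (2 * real n)"
  have \<eta>': "\<eta>' > 0" using E npos by (simp add: \<eta>'_def)
  have "\<exists>l. i < m \<and> q < n \<longrightarrow> (\<forall>t\<in>{0..real n0}. \<bar>horner l t - hs i q t\<bar> \<le> \<eta>')" for i q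
  proof (cases "i < m \<and> q < n")
    case True
    have "continuous_on {0..real n0} (hs i q)"
      using hs True by (blast intro: continuous_on_subset)
    then obtain pf where pf: "real_polynomial_function pf" "\<And>t. t \<in> {0..real n0} \<Longrightarrow> \<bar>hs i q t - pf t\<bar> < \<eta>'"
      using Stone_Weierstrass_real_polynomial_function[OF compact_Icc _ \<eta>'] by blast
    then obtain a N where aN: "pf = (\<lambda>x. \<Sum>i\<le>N. a i * x ^ i)"
      using real_polynomial_function_iff_sum by blast
    have "horner (map a [0..<0 + Suc N]) t = pf t" for t
      unfolding horner_sum aN by (simp add: lessThan_Suc_atMost)
    then show ?thesis using pf(2) by (intro exI[of _ "map a [0..<0 + Suc N]"]) (force simp: abs_minus_commute)
  qed auto
  then obtain cs where cs: "\<And>i q. i < m \<Longrightarrow> q < n \<Longrightarrow> \<forall>t\<in>{0..real n0}. \<bar>horner (cs i q) t - hs i q t\<bar> \<le> \<eta>'"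
    using choice[of "\<lambda>i f. \<forall>q. \<exists>l. i < m \<and> q < n \<longrightarrow> (\<forall>t\<in>{0..real n0}. \<bar>horner l t - hs i q t\<bar> \<le> \<eta>')"]
      choice by metis
  have R: "real n0 > 0" using n0_pos by simp
  have E2: "E / 2 > 0" using E by simp
  obtain \<Phi> where \<Phi>: "is_network \<sigma> n m (n + m + 2) \<Phi>"
    "\<And>y. (\<forall>j<n. \<bar>y j\<bar> \<le> real n0) \<and> (\<forall>j. n \<le> j \<longrightarrow> y j = 0) \<Longrightarrow>
        (\<forall>i<m. \<bar>\<Phi> y i - (\<Sum>q<n. horner (cs i q) (y q))\<bar> \<le> E / 2)"
    using net_exists[OF npos R E2, of m cs] by blast
  define H where "H x = \<Phi> (F x)" for x
  have HNN: "H \<in> NN (2*M+m+3) m (PiE {..<n0} X) \<sigma> (2*M+1) F"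
  proof -
    have e: "n + m + 2 = 2*M+m+3" by (simp add: n_def)
    have "is_network \<sigma> (2*M+1) m (2*M+m+3) \<Phi>" using \<Phi>(1)[unfolded e] by (simp only: n_def)
    then show ?thesis unfolding NN_def H_def by blast
  qed
  have bound: "\<bar>g x i - H x i\<bar> \<le> E" if x: "x \<in> K" and i: "i < m" for x i
  proof -
    have xT: "x \<in> T" using x K_sub by (auto simp: T_def)
    define y where "y = F x"
    have yq: "y q = (\<Sum>p<n0. \<psi> p q (x p))" if "q < n" for q
      using that by (simp add: y_def F_def s_def n_def)
    have y0: "y j = 0" if "n \<le> j" for j using that by (simp add: y_def F_def n_def)
    have yr: "y q \<in> {0..real n0}" if q: "q < n" for q
    proof -
      have pr: "\<psi> p q (x p) \<in> {0..1}" if "p < n0" for p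
      proof -
        have "x p \<in> X p" using xT that by (auto simp: T_def PiE_iff)
        then show ?thesis using \<psi>_range[OF that q[unfolded n_def]] by blast
      qed
      have "(\<Sum>p<n0. \<psi> p q (x p)) \<le> of_nat (card {..<n0}) * 1"
        by (rule sum_bounded_above) (use pr in auto)
      moreover have "0 \<le> (\<Sum>p<n0. \<psi> p q (x p))" by (rule sum_nonneg) (use pr in auto)
      ultimately show ?thesis using yq[OF q] by simp
    qed
    have gx: "g x i = (\<Sum>q<n. hs i q (y q))"
    proof -
      have "g x i = Gs i x" using Gs[OF i] x by simp
      also have "\<dots> = (\<Sum>q<n. hs i q (\<Sum>p<n0. \<psi> p q (x p)))" using hs[OF i] xT by blast
      also have "\<dots> = (\<Sum>q<n. hs i q (y q))" by (rule sum.cong) (simp_all add: yq)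
      finally show ?thesis .
    qed
    have "(\<forall>j<n. \<bar>y j\<bar> \<le> real n0) \<and> (\<forall>j. n \<le> j \<longrightarrow> y j = 0)"
      using yr y0 by auto
    then have A: "\<bar>H x i - (\<Sum>q<n. horner (cs i q) (y q))\<bar> \<le> E / 2"
      using \<Phi>(2) i by (simp add: H_def y_def)
    have "\<bar>(\<Sum>q<n. horner (cs i q) (y q)) - (\<Sum>q<n. hs i q (y q))\<bar> \<le> (\<Sum>q<n. \<eta>')"
      unfolding sum_subtractf[symmetric]
      by (rule order_trans[OF sum_abs sum_mono]) (use cs i yr in auto)
    also have "\<dots> = E / 2" using npos by (simp add: \<eta>'_def)
    finally have B: "\<bar>(\<Sum>q<n. horner (cs i q) (y q)) - (\<Sum>q<n. hs i q (y q))\<bar> \<le> E / 2" .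
    show ?thesis using A B gx by linarith
  qed
  have "euclid_norm m (\<lambda>i. g x i - H x i) \<le> \<epsilon> / 2" if x: "x \<in> K" for x
  proof -
    have "(\<Sum>i<m. (g x i - H x i)\<^sup>2) \<le> (\<Sum>i<m. E\<^sup>2)"
    proof (rule sum_mono)
      fix i assume "i \<in> {..<m}"
      then have "\<bar>g x i - H x i\<bar> \<le> E" using bound x by auto
      then show "(g x i - H x i)\<^sup>2 \<le> E\<^sup>2" by (metis abs_ge_zero power2_abs power_mono)
    qed
    also have "\<dots> = real m * E\<^sup>2" by simp
    also have "\<dots> \<le> (real m * E)\<^sup>2" using m_pos E by (simp add: power2_eq_square)
    finally have "euclid_norm m (\<lambda>i. g x i - H x i) \<le> sqrt ((real m * E)\<^sup>2)"
      unfolding euclid_norm_def by (rule real_sqrt_le_mono)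
    also have "\<dots> = real m * E" using E by simp
    also have "\<dots> = \<epsilon> / 2" using m_pos by (simp add: E_def)
    finally show ?thesis .
  qed
  then show ?thesis using HNN \<epsilon>_pos by (intro bexI[of _ H] exI[of _ "\<epsilon> / 2"]) auto
qed

end
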